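(* Let $\Sigma_1,\Sigma_2$ be systems as in the context satisfying: $(p_0)$ $\Psi_1=\Psi_2$; $(p_1)$ $C_1A_1^tB_1=C_2A_2^tB_2$ for all $t\ge0$; $(p_2)$ $C_1A_1^tG_1\mu_1=C_2A_2^tG_2\mu_2$ for all $t\ge0$; $(p_3)$ $C_1A_1^kG_1G_1^T(A_1^h)^TC_1^T=C_2A_2^kG_2G_2^T(A_2^h)^TC_2^T$ for all $h,k\ge0$. Then, with $\tilde n=n_1+n_2$ and $Q_{i,\tilde n}=\mathcal{O}bs_{\tilde n}(A_i,C_i)$, the subspace $\ker([Q_{1,\tilde n}\ \ -Q_{2,\tilde n}])$ is the largest subspace relation in $\mathbb R^{n_1+n_2}$ with respect to which $\Sigma_1$ and $\Sigma_2$ have equivalent stochastic external behavior.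
   Context: For $i=1,2$, $\Sigma_i$ is the system $x_i(t+1)=A_ix_i(t)+B_iu(t)+G_iw_i(t)$, $y_i(t)=C_ix_i(t)+\nu_i(t)$, $t\in\mathbb{N}$, with $x_i\in\mathbb{R}^{n_i}$, $u\in\mathbb{R}^m$, $w_i\in\mathbb{R}^{l_i}$, $y_i,\nu_i\in\mathbb{R}^p$, where $(w_i(t))_t$ is i.i.d. with $w_i(t)\sim\mathcal N(\mu_i,I_{l_i})$, $(\nu_i(t))_t$ is i.i.d. with $\nu_i(t)\sim\mathcal N(0,\Psi_i)$, and the two sequences are mutually independent. For a deterministic initial state $x_i^0$ and deterministic input $\mathbf u:\mathbb N\to\mathbb R^m$, $\mathbf x_i|_{x_i^0,\mathbf u}(t)=A_i^tx_i^0+\sum_{\tau=0}^{t-1}A_i^{t-1-\tau}(B_iu(\tau)+G_iw_i(\tau))$, $\mathbf y_i|_{x_i^0,\mathbf u}(t)=C_i\mathbf x_i|_{x_i^0,\mathbf u}(t)+\nu_i(t)$. Processes are stochastically equivalent ($\sim$) if all finite-dimensional joint distributions coincide. For a subspace $\mathcal R\subseteq\mathbb R^{n_1}\times\mathbb R^{n_2}$, $\Sigma_1,\Sigma_2$ have equivalent stochastic external behavior with respect to $\mathcal R$ if $\mathbf y_1|_{x_1^0,\mathbf u}\sim\mathbf y_2|_{x_2^0,\mathbf u}$ for all $(x_1^0,x_2^0)\in\mathcal R$ and all inputs $\mathbf u$. $\mathcal{O}bs_k(A,C)$ is the matrix obtained by stacking $C,CA,\dots,CA^{k-1}$ vertically.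 *)

theory Defs
  imports "HOL-Analysis.Analysis" "HOL-Probability.Probability"
begin

fun matpow :: "real^'n^'n \<Rightarrow> nat \<Rightarrow> real^'n^'n" where
  "matpow A 0 = mat 1"
| "matpow A (Suc k) = matpow A k ** A"

text \<open>Observability map: the action of the stacked matrix Obs_k(A,C) = [C; CA; ...; CA^(k-1)]
  on a vector x, represented as the finite sequence of its k blocks (zero beyond index k).\<close>
definition Obs :: "nat \<Rightarrow> real^'n^'n \<Rightarrow> real^'n^'p \<Rightarrow> real^'n \<Rightarrow> (nat \<Rightarrow> real^'p)" where
  "Obs k A C x = (\<lambda>j. if j < k then (C ** matpow A j) *v x else 0)"

definition gauss_real :: "real \<Rightarrow> real \<Rightarrow> real measure" where
  "gauss_real m v = (if v = 0 then return borel m else density lborel (normal_density m (sqrt v)))"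

definition gaussian_vec :: "'a measure \<Rightarrow> ('a \<Rightarrow> real^'l) \<Rightarrow> real^'l \<Rightarrow> real^'l^'l \<Rightarrow> bool" where
  "gaussian_vec M X m S \<longleftrightarrow> X \<in> borel_measurable M \<and>
     (\<forall>a. distr M borel (\<lambda>\<omega>. a \<bullet> X \<omega>) = gauss_real (a \<bullet> m) (a \<bullet> (S *v a)))"

text \<open>Noise model on a probability space M: (w(t))_t i.i.d. N(mu, I), (nu(t))_t i.i.d. N(0, Psi),
  the two sequences mutually independent (i.e. the whole family {w(t), nu(s)} is independent).\<close>
definition noise_model :: "'a measure \<Rightarrow> real^'l \<Rightarrow> real^'p^'p \<Rightarrow> (nat \<Rightarrow> 'a \<Rightarrow> real^'l)
    \<Rightarrow> (nat \<Rightarrow> 'a \<Rightarrow> real^'p) \<Rightarrow> bool" where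
  "noise_model M mu Psi w nu \<longleftrightarrow> prob_space M \<and>
     (\<forall>t. w t \<in> borel_measurable M \<and> nu t \<in> borel_measurable M) \<and>
     prob_space.indep_vars M (\<lambda>_. borel) (\<lambda>t \<omega>. (w t \<omega>, nu t \<omega>)) UNIV \<and>
     (\<forall>t. distr M borel (\<lambda>\<omega>. (w t \<omega>, nu t \<omega>)) =
        distr M borel (w t) \<Otimes>\<^sub>M distr M borel (nu t)) \<and>
     (\<forall>t. gaussian_vec M (w t) mu (mat 1)) \<and>
     (\<forall>t. gaussian_vec M (nu t) 0 Psi)"

definition state_proc :: "real^'n^'n \<Rightarrow> real^'m^'n \<Rightarrow> real^'l^'n \<Rightarrow> (nat \<Rightarrow> 'a \<Rightarrow> real^'l)
    \<Rightarrow> real^'n \<Rightarrow> (nat \<Rightarrow> real^'m) \<Rightarrow> nat \<Rightarrow> 'a \<Rightarrow> real^'n" where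
  "state_proc A B G w x0 u t \<omega> = matpow A t *v x0 +
     (\<Sum>\<tau><t. matpow A (t - 1 - \<tau>) *v (B *v u \<tau> + G *v w \<tau> \<omega>))"

definition output_proc :: "real^'n^'n \<Rightarrow> real^'m^'n \<Rightarrow> real^'l^'n \<Rightarrow> real^'n^'p
    \<Rightarrow> (nat \<Rightarrow> 'a \<Rightarrow> real^'l) \<Rightarrow> (nat \<Rightarrow> 'a \<Rightarrow> real^'p)
    \<Rightarrow> real^'n \<Rightarrow> (nat \<Rightarrow> real^'m) \<Rightarrow> nat \<Rightarrow> 'a \<Rightarrow> real^'p" where
  "output_proc A B G C w nu x0 u t \<omega> = C *v state_proc A B G w x0 u t \<omega> + nu t \<omega>"

definition stoch_equiv :: "'a measure \<Rightarrow> (nat \<Rightarrow> 'a \<Rightarrow> real^'p) \<Rightarrow> 'b measure \<Rightarrow> (nat \<Rightarrow> 'b \<Rightarrow> real^'p) \<Rightarrow> bool" where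
  "stoch_equiv M1 Y1 M2 Y2 \<longleftrightarrow> (\<forall>T. finite T \<longrightarrow>
     distr M1 (PiM T (\<lambda>_. borel)) (\<lambda>\<omega>. restrict (\<lambda>t. Y1 t \<omega>) T) =
     distr M2 (PiM T (\<lambda>_. borel)) (\<lambda>\<omega>. restrict (\<lambda>t. Y2 t \<omega>) T))"

end

theory Submission
  imports Defs
begin
lemma fm_char_unique:
  fixes M1 M2 :: "real measure"
  assumes f1: "finite_measure M1" and f2: "finite_measure M2"
    and s1: "sets M1 = sets borel" and s2: "sets M2 = sets borel"
    and ch: "\<And>t. (CLINT x|M1. iexp(t*x)) = (CLINT x|M2. iexp(t*x))"
  shows "M1 = M2"
proof -
  interpret F1: finite_measure M1 by fact
  interpret F2: finite_measure M2 by fact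
  note [measurable_cong] = s1 s2
  have sp1: "space M1 = UNIV" using sets_eq_imp_space_eq[OF s1] by simp
  have sp2: "space M2 = UNIV" using sets_eq_imp_space_eq[OF s2] by simp
  have U1: "UNIV \<in> sets M1" using sp1 sets.top by metis
  have U2: "UNIV \<in> sets M2" using sp2 sets.top by metis
  define c where "c = measure M1 UNIV"
  have "(CLINT x|M1. iexp(0*x)) = complex_of_real (measure M1 UNIV)"
    using sp1 by (simp add: scaleR_conv_of_real)
  moreover have "(CLINT x|M2. iexp(0*x)) = complex_of_real (measure M2 UNIV)"
    using sp2 by (simp add: scaleR_conv_of_real)
  ultimately have cc: "measure M2 UNIV = c" using ch[of 0] unfolding c_def by simp
  have c0: "c \<ge> 0" unfolding c_def by simp
  show ?thesis
  proof (cases "c = 0")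
    case True
    have "emeasure M1 A = emeasure M2 A" if "A \<in> sets M1" for A
    proof -
      have "emeasure M1 A \<le> emeasure M1 UNIV" using sp1 by (metis emeasure_space)
      also have "\<dots> = 0" using True sp1 F1.emeasure_eq_measure unfolding c_def by auto
      finally have a: "emeasure M1 A = 0" by simp
      have "emeasure M2 A \<le> emeasure M2 UNIV" using sp2 by (metis emeasure_space)
      also have "\<dots> = 0" using True cc sp2 F2.emeasure_eq_measure by auto
      finally have b: "emeasure M2 A = 0" by simp
      show ?thesis using a b by simp
    qed
    then show ?thesis by (intro measure_eqI) (simp_all add: s1 s2)
  next
    case False
    then have cpos: "c > 0" using c0 by simp
    define N1 where "N1 = density M1 (\<lambda>_. ennreal (1/c))"
    define N2 where "N2 = density M2 (\<lambda>_. ennreal (1/c))"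
    have eN1: "emeasure N1 A = ennreal (1/c) * emeasure M1 A" if "A \<in> sets M1" for A
      unfolding N1_def using that by (simp add: emeasure_density nn_integral_cmult_indicator)
    have eN2: "emeasure N2 A = ennreal (1/c) * emeasure M2 A" if "A \<in> sets M2" for A
      unfolding N2_def using that by (simp add: emeasure_density nn_integral_cmult_indicator)
    have rd1: "real_distribution N1"
    proof -
      have "emeasure N1 (space N1) = 1"
        using eN1[OF U1] sp1 F1.emeasure_eq_measure cpos unfolding N1_def c_def
        by (simp add: ennreal_mult''[symmetric])
      then show ?thesis unfolding real_distribution_def real_distribution_axioms_def
        by (auto intro!: prob_spaceI simp: N1_def s1)
    qed
    have rd2: "real_distribution N2"
    proof -
      have "emeasure N2 (space N2) = 1"
        using eN2[OF U2] sp2 F2.emeasure_eq_measure cpos cc unfolding N2_def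
        by (simp add: ennreal_mult''[symmetric])
      then show ?thesis unfolding real_distribution_def real_distribution_axioms_def
        by (auto intro!: prob_spaceI simp: N2_def s2)
    qed
    have "char N1 = char N2"
    proof
      fix t
      have "char N1 t = (1/c) *\<^sub>R (CLINT x|M1. iexp(t*x))"
        unfolding char_def N1_def using cpos
        by (subst integral_density) (auto simp: s1)
      moreover have "char N2 t = (1/c) *\<^sub>R (CLINT x|M2. iexp(t*x))"
        unfolding char_def N2_def using cpos
        by (subst integral_density) (auto simp: s2)
      ultimately show "char N1 t = char N2 t" using ch[of t] by simp
    qed
    then have NN: "N1 = N2" using Levy_uniqueness rd1 rd2 by blast
    have "emeasure M1 A = emeasure M2 A" if "A \<in> sets M1" for A
    proof -
      have "ennreal (1/c) * emeasure M1 A = ennreal (1/c) * emeasure M2 A"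
        using eN1[OF that] eN2[of A] that s1 s2 NN by simp
      then have "ennreal c * (ennreal (1/c) * emeasure M1 A) = ennreal c * (ennreal (1/c) * emeasure M2 A)"
        by simp
      moreover have "ennreal c * ennreal (1/c) = 1" using cpos
        by (simp add: ennreal_mult[symmetric])
      ultimately show ?thesis by (simp add: mult.assoc[symmetric])
    qed
    then show ?thesis by (intro measure_eqI) (simp_all add: s1 s2)
  qed
qed

lemma iexp_cis: "iexp x = cis x"
  by (simp add: cis_conv_exp)

lemma cos_iexp: "complex_of_real (cos th) * iexp s = (iexp (th + s) + iexp (- th + s)) / 2"
  unfolding iexp_cis by (simp add: complex_eq_iff cos_add sin_add field_simps cos_diff sin_diff)

lemma sin_iexp: "complex_of_real (sin th) * iexp s = - \<i> * (iexp (th + s) - iexp (- th + s)) / 2"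
  unfolding iexp_cis by (simp add: complex_eq_iff cos_add sin_add field_simps cos_diff sin_diff)

lemma iexp_cos_sin: "iexp th = complex_of_real (cos th) + \<i> * complex_of_real (sin th)"
  by (simp add: cis_conv_exp[symmetric] cis.ctr complex_eq_iff)

lemma sum_upd_insert:
  assumes "i \<notin> J" "finite J"
  shows "(\<Sum>j\<in>insert i J. (a(i:=t)) j * x j) = t * x i + (\<Sum>j\<in>J. a j * (x j::real))"
proof -
  have "(\<Sum>j\<in>J. (a(i:=t)) j * x j) = (\<Sum>j\<in>J. a j * x j)"
    using assms by (intro sum.cong) auto
  then show ?thesis using assms by simp
qed

lemma finite_density_bounded:
  assumes "finite_measure M" "g \<in> borel_measurable M" "\<And>x. 0 \<le> g x" "\<And>x. g x \<le> c"
  shows "finite_measure (density M (\<lambda>x. ennreal (g x)))"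
proof (rule finite_measureI)
  interpret finite_measure M by fact
  have "emeasure (density M (\<lambda>x. ennreal (g x))) (space (density M (\<lambda>x. ennreal (g x))))
      = (\<integral>\<^sup>+ x. ennreal (g x) * indicator (space M) x \<partial>M)"
    using assms by (simp add: emeasure_density)
  also have "\<dots> \<le> (\<integral>\<^sup>+ x. ennreal c \<partial>M)"
    using assms by (intro nn_integral_mono) (auto split: split_indicator intro!: ennreal_leI)
  also have "\<dots> = ennreal c * emeasure M (space M)" by simp
  also have "\<dots> < \<infinity>" by (simp add: ennreal_mult_less_top emeasure_eq_measure)
  finally show "emeasure (density M (\<lambda>x. ennreal (g x))) (space (density M (\<lambda>x. ennreal (g x)))) \<noteq> \<infinity>"
    by simp
qed

lemma integrable_iexp_fm:
  assumes "finite_measure M" "f \<in> borel_measurable M"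
  shows "integrable M (\<lambda>x. iexp (f x))"
  by (rule finite_measure.integrable_const_bound[OF assms(1), where B=1]) (use assms(2) in auto)

lemma integrable_bounded_fm:
  fixes f :: "_ \<Rightarrow> real"
  assumes "finite_measure M" "f \<in> borel_measurable M" "\<And>x. \<bar>f x\<bar> \<le> c"
  shows "integrable M f"
  by (rule finite_measure.integrable_const_bound[OF assms(1), where B=c]) (use assms in auto)

lemma integrable_bounded_fm_c:
  fixes f :: "_ \<Rightarrow> complex"
  assumes "finite_measure M" "f \<in> borel_measurable M" "\<And>x. norm (f x) \<le> c"
  shows "integrable M f"
  by (rule finite_measure.integrable_const_bound[OF assms(1), where B=c]) (use assms in auto)


definition Eb :: "('i \<Rightarrow> real) measure \<Rightarrow> 'i set \<Rightarrow> ('i \<Rightarrow> real) \<Rightarrow> complex" where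
  "Eb M I a = (CLINT x|M. iexp (\<Sum>j\<in>I. a j * x j))"

lemma cw_cos_formula:
  fixes M :: "('i \<Rightarrow> real) measure"
  assumes fM: "finite_measure M" and sM: "sets M = sets (PiM (insert i J) (\<lambda>_. borel))"
    and iJ: "i \<notin> J" and fin: "finite J"
  shows "(CLINT x|M. complex_of_real (1 + cos (\<Sum>j\<in>J. a j * x j)) * iexp (t * x i))
     = Eb M (insert i J) ((\<lambda>_. 0)(i:=t)) + (Eb M (insert i J) (a(i:=t)) + Eb M (insert i J) ((\<lambda>j. - a j)(i:=t))) / 2"
    and "(CLINT x|M. complex_of_real (1 + sin (\<Sum>j\<in>J. a j * x j)) * iexp (t * x i))
     = Eb M (insert i J) ((\<lambda>_. 0)(i:=t)) - \<i> * (Eb M (insert i J) (a(i:=t)) - Eb M (insert i J) ((\<lambda>j. - a j)(i:=t))) / 2"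
proof -
  note [measurable_cong] = sM
  have m: "(\<lambda>x. \<Sum>j\<in>K. b j * x j) \<in> borel_measurable M" if "K \<subseteq> insert i J" for b K
    using that by (auto intro!: borel_measurable_sum borel_measurable_times measurable_component_singleton)
  have mi: "(\<lambda>x. x i) \<in> borel_measurable M" by measurable
  have I: "integrable M (\<lambda>x. iexp (\<Sum>j\<in>insert i J. b j * x j))" for b
    by (rule integrable_iexp_fm[OF fM m]) simp
  have s0: "(\<Sum>j\<in>insert i J. ((\<lambda>_. 0)(i:=t)) j * x j) = t * x i" for x
    using sum_upd_insert[OF iJ fin, of "\<lambda>_. 0" t x] by simp
  have s1: "(\<Sum>j\<in>insert i J. (a(i:=t)) j * x j) = (\<Sum>j\<in>J. a j * x j) + t * x i" for x
    using sum_upd_insert[OF iJ fin, of a t x] by simp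
  have s2: "(\<Sum>j\<in>insert i J. ((\<lambda>j. - a j)(i:=t)) j * x j) = - (\<Sum>j\<in>J. a j * x j) + t * x i" for x
    using sum_upd_insert[OF iJ fin, of "\<lambda>j. - a j" t x] by (simp add: sum_negf)
  have pc: "complex_of_real (1 + cos (\<Sum>j\<in>J. a j * x j)) * iexp (t * x i) =
     iexp (\<Sum>j\<in>insert i J. ((\<lambda>_. 0)(i:=t)) j * x j) + (iexp (\<Sum>j\<in>insert i J. (a(i:=t)) j * x j)
       + iexp (\<Sum>j\<in>insert i J. ((\<lambda>j. - a j)(i:=t)) j * x j)) / 2" for x
    unfolding s0 s1 s2 by (simp only: of_real_add of_real_1 distrib_right mult_1_left cos_iexp)
  have ps: "complex_of_real (1 + sin (\<Sum>j\<in>J. a j * x j)) * iexp (t * x i) =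
     iexp (\<Sum>j\<in>insert i J. ((\<lambda>_. 0)(i:=t)) j * x j) - \<i> * (iexp (\<Sum>j\<in>insert i J. (a(i:=t)) j * x j)
       - iexp (\<Sum>j\<in>insert i J. ((\<lambda>j. - a j)(i:=t)) j * x j)) / 2" for x
    unfolding s0 s1 s2 by (simp only: of_real_add of_real_1 distrib_right mult_1_left sin_iexp diff_conv_add_uminus minus_mult_left minus_divide_left)
  show "(CLINT x|M. complex_of_real (1 + cos (\<Sum>j\<in>J. a j * x j)) * iexp (t * x i))
     = Eb M (insert i J) ((\<lambda>_. 0)(i:=t)) + (Eb M (insert i J) (a(i:=t)) + Eb M (insert i J) ((\<lambda>j. - a j)(i:=t))) / 2"
    unfolding pc Eb_def using I by simp
  show "(CLINT x|M. complex_of_real (1 + sin (\<Sum>j\<in>J. a j * x j)) * iexp (t * x i))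
     = Eb M (insert i J) ((\<lambda>_. 0)(i:=t)) - \<i> * (Eb M (insert i J) (a(i:=t)) - Eb M (insert i J) ((\<lambda>j. - a j)(i:=t))) / 2"
    unfolding ps Eb_def using I by simp
qed


lemma rho_facts:
  fixes M :: "('i \<Rightarrow> real) measure" and g :: "('i \<Rightarrow> real) \<Rightarrow> real"
  assumes fM: "finite_measure M" and sM: "sets M = sets (PiM I (\<lambda>_. borel))" and iI: "i \<in> I"
    and gm: "g \<in> borel_measurable M" and g0: "\<And>x. 0 \<le> g x" and gc: "\<And>x. g x \<le> c"
  defines "\<rho> \<equiv> distr (density M (\<lambda>x. ennreal (g x))) borel (\<lambda>x. x i)"
  shows "finite_measure \<rho>" "sets \<rho> = sets borel"
    "\<And>t. (CLINT y|\<rho>. iexp (t * y)) = (CLINT x|M. complex_of_real (g x) * iexp (t * x i))"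
    "\<And>B. B \<in> sets borel \<Longrightarrow> (LINT y|\<rho>. (indicator B y::real)) = (LINT x|M. g x * indicator B (x i))"
proof -
  note [measurable_cong] = sM
  have mi: "(\<lambda>x. x i) \<in> measurable M borel" using iI by measurable
  have mi': "(\<lambda>x. x i) \<in> measurable (density M (\<lambda>x. ennreal (g x))) borel"
    using mi by simp
  show "finite_measure \<rho>" unfolding \<rho>_def
    by (rule finite_measure.finite_measure_distr[OF finite_density_bounded[OF fM gm g0 gc] mi'])
  show "sets \<rho> = sets borel" unfolding \<rho>_def by simp
  show "(CLINT y|\<rho>. iexp (t * y)) = (CLINT x|M. complex_of_real (g x) * iexp (t * x i))" for t
  proof -
    have fm: "(\<lambda>x. iexp (t * x i)) \<in> borel_measurable M" using mi by measurable
    have "(CLINT y|\<rho>. iexp (t*y)) = (CLINT x|density M (\<lambda>x. ennreal (g x)). iexp(t * x i))"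
      unfolding \<rho>_def by (rule integral_distr[OF mi']) simp
    also have "\<dots> = (CLINT x|M. g x *\<^sub>R iexp (t * x i))"
      by (rule integral_density[OF fm gm]) (simp add: g0)
    finally show ?thesis by (simp add: scaleR_conv_of_real)
  qed
  show "(LINT y|\<rho>. (indicator B y::real)) = (LINT x|M. g x * indicator B (x i))" if "B \<in> sets borel" for B
  proof -
    have fm: "(\<lambda>x. indicator B (x i) :: real) \<in> borel_measurable M" using mi that by measurable
    have "(LINT y|\<rho>. (indicator B y::real)) = (LINT x|density M (\<lambda>x. ennreal (g x)). (indicator B (x i)::real))"
      unfolding \<rho>_def using that mi' by (intro integral_distr) auto
    also have "\<dots> = (LINT x|M. g x *\<^sub>R indicator B (x i))"
      by (rule integral_density[OF fm gm]) (simp add: g0)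
    finally show ?thesis by simp
  qed
qed


lemma kappa_facts:
  fixes M :: "('i \<Rightarrow> real) measure"
  assumes fM: "finite_measure M" and sM: "sets M = sets (PiM (insert i J) (\<lambda>_. borel))"
    and iJ: "i \<notin> J" and fin: "finite J" and B: "B \<in> sets borel"
  defines "\<kappa> \<equiv> distr (density M (\<lambda>x. ennreal (indicator B (x i)))) (PiM J (\<lambda>_. borel)) (\<lambda>x. restrict x J)"
  shows "finite_measure \<kappa>" "sets \<kappa> = sets (PiM J (\<lambda>_. borel))"
    "\<And>a. (CLINT z|\<kappa>. iexp (\<Sum>j\<in>J. a j * z j)) =
        complex_of_real (LINT x|M. indicator B (x i) * cos (\<Sum>j\<in>J. a j * x j))
        + \<i> * complex_of_real (LINT x|M. indicator B (x i) * sin (\<Sum>j\<in>J. a j * x j))"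
    "\<And>F. (\<And>j. j \<in> insert i J \<Longrightarrow> F j \<in> sets borel) \<Longrightarrow> F i = B \<Longrightarrow>
        emeasure \<kappa> (Pi\<^sub>E J F) = emeasure M (Pi\<^sub>E (insert i J) F)"
proof -
  note [measurable_cong] = sM
  interpret finite_measure M by fact
  have spM: "space M = (\<Pi>\<^sub>E j\<in>insert i J. UNIV)"
    using sets_eq_imp_space_eq[OF sM] by (simp add: space_PiM)
  have gm: "(\<lambda>x. indicator B (x i) :: real) \<in> borel_measurable M" using B by measurable
  have mr: "(\<lambda>x. restrict x J) \<in> measurable M (PiM J (\<lambda>_. borel))"
    unfolding measurable_cong_sets[OF sM refl] by (rule measurable_restrict_subset) auto
  have mr': "(\<lambda>x. restrict x J) \<in> measurable (density M (\<lambda>x. ennreal (indicator B (x i)))) (PiM J (\<lambda>_. borel))"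
    using mr by simp
  have fD: "finite_measure (density M (\<lambda>x. ennreal (indicator B (x i))))"
    by (rule finite_density_bounded[OF fM gm, where c=1]) auto
  show "finite_measure \<kappa>" unfolding \<kappa>_def
    by (rule finite_measure.finite_measure_distr[OF fD mr'])
  show "sets \<kappa> = sets (PiM J (\<lambda>_. borel))" unfolding \<kappa>_def by simp
  show "(CLINT z|\<kappa>. iexp (\<Sum>j\<in>J. a j * z j)) =
        complex_of_real (LINT x|M. indicator B (x i) * cos (\<Sum>j\<in>J. a j * x j))
        + \<i> * complex_of_real (LINT x|M. indicator B (x i) * sin (\<Sum>j\<in>J. a j * x j))" for a
  proof -
    have mt: "(\<lambda>x. \<Sum>j\<in>J. a j * x j) \<in> borel_measurable M"
      by (auto intro!: borel_measurable_sum borel_measurable_times measurable_component_singleton)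
    have fm: "(\<lambda>x. iexp (\<Sum>j\<in>J. a j * x j)) \<in> borel_measurable M" using mt by measurable
    have "(CLINT z|\<kappa>. iexp (\<Sum>j\<in>J. a j * z j)) =
          (CLINT x|density M (\<lambda>x. ennreal (indicator B (x i))). iexp (\<Sum>j\<in>J. a j * restrict x J j))"
      unfolding \<kappa>_def by (rule integral_distr[OF mr']) measurable
    also have "\<dots> = (CLINT x|density M (\<lambda>x. ennreal (indicator B (x i))). iexp (\<Sum>j\<in>J. a j * x j))"
      by (intro Bochner_Integration.integral_cong refl arg_cong[where f=iexp] sum.cong) auto
    also have "\<dots> = (CLINT x|M. indicator B (x i) *\<^sub>R iexp (\<Sum>j\<in>J. a j * x j))"
      by (rule integral_density[OF fm gm]) simp
    also have "\<dots> = (CLINT x|M. complex_of_real (indicator B (x i) * cos (\<Sum>j\<in>J. a j * x j))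
          + \<i> * complex_of_real (indicator B (x i) * sin (\<Sum>j\<in>J. a j * x j)))"
      by (intro Bochner_Integration.integral_cong refl)
         (subst iexp_cos_sin, simp add: scaleR_conv_of_real algebra_simps)
    also have "\<dots> = complex_of_real (LINT x|M. indicator B (x i) * cos (\<Sum>j\<in>J. a j * x j))
        + \<i> * complex_of_real (LINT x|M. indicator B (x i) * sin (\<Sum>j\<in>J. a j * x j))"
    proof -
      have i1: "integrable M (\<lambda>x. indicator B (x i) * cos (\<Sum>j\<in>J. a j * x j) :: real)"
        by (rule integrable_bounded_fm[OF fM _, where c=1]) (use mt gm in \<open>auto simp: abs_mult indicator_def\<close>)
      have i2: "integrable M (\<lambda>x. indicator B (x i) * sin (\<Sum>j\<in>J. a j * x j) :: real)"
        by (rule integrable_bounded_fm[OF fM _, where c=1]) (use mt gm in \<open>auto simp: abs_mult indicator_def\<close>)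
      have c1: "integrable M (\<lambda>x. complex_of_real (indicator B (x i) * cos (\<Sum>j\<in>J. a j * x j)))"
        by (rule integrable_bounded_linear[OF bounded_linear_of_real i1])
      have c2: "integrable M (\<lambda>x. \<i> * complex_of_real (indicator B (x i) * sin (\<Sum>j\<in>J. a j * x j)))"
        by (intro integrable_mult_right integrable_bounded_linear[OF bounded_linear_of_real i2])
      show ?thesis
        by (simp only: Bochner_Integration.integral_add[OF c1 c2] integral_mult_right_zero integral_complex_of_real)
    qed
    finally show ?thesis .
  qed
  show "emeasure \<kappa> (Pi\<^sub>E J F) = emeasure M (Pi\<^sub>E (insert i J) F)"
    if F: "\<And>j. j \<in> insert i J \<Longrightarrow> F j \<in> sets borel" and Fi: "F i = B" for F
  proof -
    have PJ: "Pi\<^sub>E J F \<in> sets (PiM J (\<lambda>_. borel))" using F fin by (auto intro!: sets_PiM_I_finite)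
      
    have "emeasure \<kappa> (Pi\<^sub>E J F) = emeasure (density M (\<lambda>x. ennreal (indicator B (x i))))
          ((\<lambda>x. restrict x J) -` Pi\<^sub>E J F \<inter> space M)"
      unfolding \<kappa>_def using PJ by (subst emeasure_distr[OF mr']) auto
    also have "\<dots> = (\<integral>\<^sup>+ x. ennreal (indicator B (x i)) * indicator ((\<lambda>x. restrict x J) -` Pi\<^sub>E J F \<inter> space M) x \<partial>M)"
      using PJ mr gm by (subst emeasure_density) (auto intro!: measurable_sets)
    also have "\<dots> = (\<integral>\<^sup>+ x. indicator (Pi\<^sub>E (insert i J) F) x \<partial>M)"
      using Fi spM by (intro nn_integral_cong) (auto simp: indicator_def PiE_iff)
    also have "\<dots> = emeasure M (Pi\<^sub>E (insert i J) F)"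
      using F fin by (intro nn_integral_indicator) (auto simp: sM intro!: sets_PiM_I_finite)
    finally show ?thesis .
  qed
qed


lemma lint_one_plus:
  fixes f h :: "'a \<Rightarrow> real"
  assumes "finite_measure M" "f \<in> borel_measurable M" "h \<in> borel_measurable M"
    "\<And>x. \<bar>f x\<bar> \<le> 1" "\<And>x. \<bar>h x\<bar> \<le> 1"
  shows "(LINT x|M. (1 + f x) * h x) = (LINT x|M. h x) + (LINT x|M. f x * h x)"
proof -
  have i1: "integrable M h" by (rule integrable_bounded_fm[OF assms(1,3,5)])
  have i2: "integrable M (\<lambda>x. f x * h x)"
    by (rule integrable_bounded_fm[OF assms(1), where c=1])
       (use assms in \<open>auto simp: abs_mult intro: mult_le_one\<close>)
  have "(LINT x|M. (1 + f x) * h x) = (LINT x|M. h x + f x * h x)"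
    by (simp add: distrib_right)
  also have "\<dots> = (LINT x|M. h x) + (LINT x|M. f x * h x)"
    using i1 i2 by simp
  finally show ?thesis .
qed

lemma CW_step:
  fixes \<mu> \<nu> :: "('i \<Rightarrow> real) measure"
  assumes iJ: "i \<notin> J" and fin: "finite J"
    and IH: "\<And>\<mu>' \<nu>'. finite_measure \<mu>' \<Longrightarrow> finite_measure \<nu>' \<Longrightarrow>
        sets \<mu>' = sets (PiM J (\<lambda>_. borel)) \<Longrightarrow> sets \<nu>' = sets (PiM J (\<lambda>_. borel)) \<Longrightarrow>
        (\<And>a. Eb \<mu>' J a = Eb \<nu>' J a) \<Longrightarrow> \<mu>' = \<nu>'"
    and f\<mu>: "finite_measure \<mu>" and f\<nu>: "finite_measure \<nu>"
    and s\<mu>: "sets \<mu> = sets (PiM (insert i J) (\<lambda>_. borel))"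
    and s\<nu>: "sets \<nu> = sets (PiM (insert i J) (\<lambda>_. borel))"
    and ch: "\<And>a. Eb \<mu> (insert i J) a = Eb \<nu> (insert i J) a"
  shows "\<mu> = \<nu>"
proof -
  let ?th = "\<lambda>a x. \<Sum>j\<in>J. a j * (x j :: real)"
  have mth: "(\<lambda>x. ?th a x) \<in> borel_measurable M"
    if "sets M = sets (PiM (insert i J) (\<lambda>_. borel))" for a and M :: "('i \<Rightarrow> real) measure"
    unfolding measurable_cong_sets[OF that refl]
    by (auto intro!: borel_measurable_sum borel_measurable_times measurable_component_singleton)
  have mi: "(\<lambda>x. x i) \<in> borel_measurable M"
    if "sets M = sets (PiM (insert i J) (\<lambda>_. borel))" for M :: "('i \<Rightarrow> real) measure"
    unfolding measurable_cong_sets[OF that refl] by (auto intro!: measurable_component_singleton)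
  have Ic: "(LINT x|\<mu>. (1 + cos (?th a x)) * indicator B (x i)) = (LINT x|\<nu>. (1 + cos (?th a x)) * indicator B (x i))"
    if B: "B \<in> sets borel" for a and B :: "real set"
  proof -
    define g where "g = (\<lambda>x. 1 + cos (?th a x))"
    have gm: "g \<in> borel_measurable \<mu>" "g \<in> borel_measurable \<nu>"
      unfolding g_def using mth[OF s\<mu>] mth[OF s\<nu>] by measurable
    have g0: "0 \<le> g x" for x unfolding g_def using cos_ge_minus_one[of "?th a x"] by linarith
    have gc: "g x \<le> 2" for x unfolding g_def using cos_le_one[of "?th a x"] by linarith
    note R\<mu> = rho_facts[OF f\<mu> s\<mu> insertI1 gm(1) g0 gc]
    note R\<nu> = rho_facts[OF f\<nu> s\<nu> insertI1 gm(2) g0 gc]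
    have "distr (density \<mu> (\<lambda>x. ennreal (g x))) borel (\<lambda>x. x i) = distr (density \<nu> (\<lambda>x. ennreal (g x))) borel (\<lambda>x. x i)"
    proof (rule fm_char_unique[OF R\<mu>(1) R\<nu>(1) R\<mu>(2) R\<nu>(2)])
      fix t
      show "(CLINT y|distr (density \<mu> (\<lambda>x. ennreal (g x))) borel (\<lambda>x. x i). iexp (t * y)) =
            (CLINT y|distr (density \<nu> (\<lambda>x. ennreal (g x))) borel (\<lambda>x. x i). iexp (t * y))"
        unfolding R\<mu>(3) R\<nu>(3) unfolding g_def
        unfolding cw_cos_formula(1)[OF f\<mu> s\<mu> iJ fin] cw_cos_formula(1)[OF f\<nu> s\<nu> iJ fin] ch ..
    qed
    then show ?thesis using R\<mu>(4)[OF B] R\<nu>(4)[OF B] unfolding g_def by simp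
  qed
  have Is: "(LINT x|\<mu>. (1 + sin (?th a x)) * indicator B (x i)) = (LINT x|\<nu>. (1 + sin (?th a x)) * indicator B (x i))"
    if B: "B \<in> sets borel" for a and B :: "real set"
  proof -
    define g where "g = (\<lambda>x. 1 + sin (?th a x))"
    have gm: "g \<in> borel_measurable \<mu>" "g \<in> borel_measurable \<nu>"
      unfolding g_def using mth[OF s\<mu>] mth[OF s\<nu>] by measurable
    have g0: "0 \<le> g x" for x unfolding g_def using sin_ge_minus_one[of "?th a x"] by linarith
    have gc: "g x \<le> 2" for x unfolding g_def using sin_le_one[of "?th a x"] by linarith
    note R\<mu> = rho_facts[OF f\<mu> s\<mu> insertI1 gm(1) g0 gc]
    note R\<nu> = rho_facts[OF f\<nu> s\<nu> insertI1 gm(2) g0 gc]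
    have "distr (density \<mu> (\<lambda>x. ennreal (g x))) borel (\<lambda>x. x i) = distr (density \<nu> (\<lambda>x. ennreal (g x))) borel (\<lambda>x. x i)"
    proof (rule fm_char_unique[OF R\<mu>(1) R\<nu>(1) R\<mu>(2) R\<nu>(2)])
      fix t
      show "(CLINT y|distr (density \<mu> (\<lambda>x. ennreal (g x))) borel (\<lambda>x. x i). iexp (t * y)) =
            (CLINT y|distr (density \<nu> (\<lambda>x. ennreal (g x))) borel (\<lambda>x. x i). iexp (t * y))"
        unfolding R\<mu>(3) R\<nu>(3) unfolding g_def
        unfolding cw_cos_formula(2)[OF f\<mu> s\<mu> iJ fin] cw_cos_formula(2)[OF f\<nu> s\<nu> iJ fin] ch ..
    qed
    then show ?thesis using R\<mu>(4)[OF B] R\<nu>(4)[OF B] unfolding g_def by simp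
  qed
  have Iind: "(LINT x|\<mu>. indicator B (x i)) = (LINT x|\<nu>. (indicator B (x i) :: real))"
    if B: "B \<in> sets borel" for B :: "real set"
    using Ic[OF B, of "\<lambda>_. 0"] by simp
  have Icos: "(LINT x|\<mu>. cos (?th a x) * indicator B (x i)) = (LINT x|\<nu>. cos (?th a x) * indicator B (x i))"
    if B: "B \<in> sets borel" for a and B :: "real set"
    using Ic[OF B, of a] Iind[OF B]
      lint_one_plus[OF f\<mu>, of "\<lambda>x. cos (?th a x)" "\<lambda>x. indicator B (x i)"]
      lint_one_plus[OF f\<nu>, of "\<lambda>x. cos (?th a x)" "\<lambda>x. indicator B (x i)"]
      mth[OF s\<mu>, of a] mth[OF s\<nu>, of a] mi[OF s\<mu>] mi[OF s\<nu>] B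
    by (auto simp: indicator_def)
  have Isin: "(LINT x|\<mu>. sin (?th a x) * indicator B (x i)) = (LINT x|\<nu>. sin (?th a x) * indicator B (x i))"
    if B: "B \<in> sets borel" for a and B :: "real set"
    using Is[OF B, of a] Iind[OF B]
      lint_one_plus[OF f\<mu>, of "\<lambda>x. sin (?th a x)" "\<lambda>x. indicator B (x i)"]
      lint_one_plus[OF f\<nu>, of "\<lambda>x. sin (?th a x)" "\<lambda>x. indicator B (x i)"]
      mth[OF s\<mu>, of a] mth[OF s\<nu>, of a] mi[OF s\<mu>] mi[OF s\<nu>] B
    by (auto simp: indicator_def)
  have box: "emeasure \<mu> (Pi\<^sub>E (insert i J) F) = emeasure \<nu> (Pi\<^sub>E (insert i J) F)"
    if F: "\<And>j. j \<in> insert i J \<Longrightarrow> F j \<in> sets borel" for F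
  proof -
    have B: "F i \<in> sets borel" using F by simp
    note K\<mu> = kappa_facts[OF f\<mu> s\<mu> iJ fin B]
    note K\<nu> = kappa_facts[OF f\<nu> s\<nu> iJ fin B]
    have "distr (density \<mu> (\<lambda>x. ennreal (indicator (F i) (x i)))) (PiM J (\<lambda>_. borel)) (\<lambda>x. restrict x J)
        = distr (density \<nu> (\<lambda>x. ennreal (indicator (F i) (x i)))) (PiM J (\<lambda>_. borel)) (\<lambda>x. restrict x J)"
    proof (rule IH[OF K\<mu>(1) K\<nu>(1) K\<mu>(2) K\<nu>(2)])
      fix a
      show "Eb (distr (density \<mu> (\<lambda>x. ennreal (indicator (F i) (x i)))) (PiM J (\<lambda>_. borel)) (\<lambda>x. restrict x J)) J a =
            Eb (distr (density \<nu> (\<lambda>x. ennreal (indicator (F i) (x i)))) (PiM J (\<lambda>_. borel)) (\<lambda>x. restrict x J)) J a"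
        unfolding Eb_def K\<mu>(3) K\<nu>(3)
        using Icos[OF B, of a] Isin[OF B, of a] by (simp add: mult.commute)
    qed
    then show ?thesis using K\<mu>(4)[of F, OF F refl] K\<nu>(4)[of F, OF F refl] by simp
  qed
  show ?thesis
  proof (rule measure_eqI_PiM_finite[where I="insert i J" and M="\<lambda>_. borel" and A="\<lambda>_. space (PiM (insert i J) (\<lambda>_. borel))"])
    show "finite (insert i J)" using fin by simp
    show "sets \<mu> = PiM (insert i J) (\<lambda>_. borel)" using s\<mu> by simp
    show "sets \<nu> = PiM (insert i J) (\<lambda>_. borel)" using s\<nu> by simp
    show "emeasure \<mu> (Pi\<^sub>E (insert i J) A) = emeasure \<nu> (Pi\<^sub>E (insert i J) A)"
      if "\<And>j. j \<in> insert i J \<Longrightarrow> A j \<in> sets borel" for A using box that by blast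
    show "range (\<lambda>_. space (PiM (insert i J) (\<lambda>_. borel))) \<subseteq> prod_algebra (insert i J) (\<lambda>_. borel :: real measure)"
      using space_in_prod_algebra[of "insert i J" "\<lambda>_. borel :: real measure"] by (auto simp: space_PiM)
    show "(\<Union>k::nat. space (PiM (insert i J) (\<lambda>_. borel))) = space (PiM (insert i J) (\<lambda>_. borel :: real measure))" by simp
    show "emeasure \<mu> (space (PiM (insert i J) (\<lambda>_. borel))) \<noteq> \<infinity>" for k :: nat
      using sets_eq_imp_space_eq[OF s\<mu>] finite_measure.emeasure_finite[OF f\<mu>] by simp
  qed
qed


lemma CW_real:
  fixes J :: "'i set"
  assumes "finite J"
  shows "\<And>\<mu> \<nu>. finite_measure \<mu> \<Longrightarrow> finite_measure \<nu> \<Longrightarrow>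
        sets \<mu> = sets (PiM J (\<lambda>_. borel :: real measure)) \<Longrightarrow> sets \<nu> = sets (PiM J (\<lambda>_. borel :: real measure)) \<Longrightarrow>
        (\<And>a. Eb \<mu> J a = Eb \<nu> J a) \<Longrightarrow> \<mu> = \<nu>"
  using assms
proof (induction J rule: finite_induct)
  case empty
  fix \<mu> \<nu> :: "('i \<Rightarrow> real) measure"
  assume f\<mu>: "finite_measure \<mu>" and f\<nu>: "finite_measure \<nu>"
    and s\<mu>: "sets \<mu> = sets (PiM {} (\<lambda>_. borel :: real measure))"
    and s\<nu>: "sets \<nu> = sets (PiM {} (\<lambda>_. borel :: real measure))"
    and ch: "\<And>a. Eb \<mu> {} a = Eb \<nu> {} a"
  interpret A: finite_measure \<mu> by fact
  interpret B: finite_measure \<nu> by fact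
  have sp\<mu>: "space \<mu> = {\<lambda>_. undefined}" using sets_eq_imp_space_eq[OF s\<mu>] by (simp add: PiM_empty)
  have sp\<nu>: "space \<nu> = {\<lambda>_. undefined}" using sets_eq_imp_space_eq[OF s\<nu>] by (simp add: PiM_empty)
  have "Eb \<mu> {} (\<lambda>_. 0) = complex_of_real (measure \<mu> (space \<mu>))"
    by (simp add: Eb_def scaleR_conv_of_real)
  moreover have "Eb \<nu> {} (\<lambda>_. 0) = complex_of_real (measure \<nu> (space \<nu>))"
    by (simp add: Eb_def scaleR_conv_of_real)
  ultimately have m: "measure \<mu> {\<lambda>_. undefined} = measure \<nu> {\<lambda>_. undefined}"
    using ch[of "\<lambda>_. 0"] sp\<mu> sp\<nu> by simp
  show "\<mu> = \<nu>"
  proof (rule measure_eqI)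
    show "sets \<mu> = sets \<nu>" using s\<mu> s\<nu> by simp
    fix A assume "A \<in> sets \<mu>"
    then have "A \<subseteq> {\<lambda>_. undefined}" using sets.sets_into_space sp\<mu> by blast
    then have "A = {} \<or> A = {\<lambda>_. undefined}" by blast
    then show "emeasure \<mu> A = emeasure \<nu> A"
      using m by (auto simp: A.emeasure_eq_measure B.emeasure_eq_measure)
  qed
next
  case (insert i J)
  show ?case
    by (rule CW_step[OF insert(2,1) insert(3)]) (use insert in auto)
qed


lemma meas_vec_nth[measurable]: "(\<lambda>x::real^'p. x $ j) \<in> borel_measurable borel"
proof -
  have "(\<lambda>x::real^'p. x $ j) = (\<lambda>x. x \<bullet> axis j 1)" by (simp add: inner_axis)
  then show ?thesis by simp
qed

lemma meas_vec_lambda: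
  assumes "\<And>j. (\<lambda>x. f x j) \<in> borel_measurable M"
  shows "(\<lambda>x. (\<chi> j. f x j) :: real^'p) \<in> borel_measurable M"
proof (subst borel_measurable_euclidean_space, intro ballI)
  fix b :: "real^'p" assume "b \<in> Basis"
  then obtain k where b: "b = axis k 1" by (auto simp: Basis_vec_def)
  have "(\<lambda>x. (\<chi> j. f x j) \<bullet> b) = (\<lambda>x. f x k)" unfolding b by (simp add: inner_axis)
  then show "(\<lambda>x. (\<chi> j. f x j) \<bullet> b) \<in> borel_measurable M" using assms by simp
qed

lemma CW_vec:
  fixes \<mu> \<nu> :: "('i \<Rightarrow> real^'p) measure"
  assumes fin: "finite T" and f\<mu>: "finite_measure \<mu>" and f\<nu>: "finite_measure \<nu>"
    and s\<mu>: "sets \<mu> = sets (PiM T (\<lambda>_. borel))" and s\<nu>: "sets \<nu> = sets (PiM T (\<lambda>_. borel))"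
    and ch: "\<And>a. (CLINT f|\<mu>. iexp (\<Sum>t\<in>T. a t \<bullet> f t)) = (CLINT f|\<nu>. iexp (\<Sum>t\<in>T. a t \<bullet> f t))"
  shows "\<mu> = \<nu>"
proof -
  define \<phi> where "\<phi> = (\<lambda>f::'i \<Rightarrow> real^'p. restrict (\<lambda>(t,j). f t $ j) (T \<times> UNIV))"
  define \<psi> where "\<psi> = (\<lambda>g::('i \<times> 'p) \<Rightarrow> real. restrict (\<lambda>t. \<chi> j. g (t,j)) T)"
  have m\<phi>: "\<phi> \<in> measurable (PiM T (\<lambda>_. borel)) (PiM (T \<times> UNIV) (\<lambda>_. borel :: real measure))"
    unfolding \<phi>_def
  proof (rule measurable_restrict)
    fix tj assume "tj \<in> T \<times> (UNIV::'p set)"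
    then obtain t j where tj: "tj = (t,j)" "t \<in> T" by auto
    have "(\<lambda>f::'i \<Rightarrow> real^'p. f t $ j) \<in> borel_measurable (PiM T (\<lambda>_. borel))"
      using tj(2) by measurable
    then show "(\<lambda>f::'i \<Rightarrow> real^'p. case tj of (t, j) \<Rightarrow> f t $ j) \<in> borel_measurable (PiM T (\<lambda>_. borel))"
      using tj by simp
  qed
  have m\<psi>: "\<psi> \<in> measurable (PiM (T \<times> UNIV) (\<lambda>_. borel :: real measure)) (PiM T (\<lambda>_. borel))"
    unfolding \<psi>_def
  proof (rule measurable_restrict)
    fix t assume t: "t \<in> T"
    show "(\<lambda>g::('i \<times> 'p) \<Rightarrow> real. (\<chi> j. g (t,j)) :: real^'p) \<in> borel_measurable (PiM (T \<times> UNIV) (\<lambda>_. borel))"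
      by (rule meas_vec_lambda) (use t in \<open>measurable, auto\<close>)
  qed
  have m\<phi>\<mu>: "\<phi> \<in> measurable \<mu> (PiM (T \<times> UNIV) (\<lambda>_. borel :: real measure))"
    unfolding measurable_cong_sets[OF s\<mu> refl] by (rule m\<phi>)
  have m\<phi>\<nu>: "\<phi> \<in> measurable \<nu> (PiM (T \<times> UNIV) (\<lambda>_. borel :: real measure))"
    unfolding measurable_cong_sets[OF s\<nu> refl] by (rule m\<phi>)
  have sp\<mu>: "space \<mu> = (\<Pi>\<^sub>E t\<in>T. UNIV)" using sets_eq_imp_space_eq[OF s\<mu>] by (simp add: space_PiM)
  have sp\<nu>: "space \<nu> = (\<Pi>\<^sub>E t\<in>T. UNIV)" using sets_eq_imp_space_eq[OF s\<nu>] by (simp add: space_PiM)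
  have Eb: "Eb (distr M (PiM (T \<times> UNIV) (\<lambda>_. borel)) \<phi>) (T \<times> UNIV) a
      = (CLINT f|M. iexp (\<Sum>t\<in>T. (\<chi> j. a (t,j)) \<bullet> f t))"
    if mM: "\<phi> \<in> measurable M (PiM (T \<times> UNIV) (\<lambda>_. borel :: real measure))" for M a
  proof -
    have "Eb (distr M (PiM (T \<times> UNIV) (\<lambda>_. borel)) \<phi>) (T \<times> UNIV) a
        = (CLINT f|M. iexp (\<Sum>tj\<in>T \<times> UNIV. a tj * \<phi> f tj))"
      unfolding Eb_def
      by (rule integral_distr[OF mM]) (use fin in \<open>auto intro!: borel_measurable_sum borel_measurable_times measurable_component_singleton\<close>)
    also have "\<dots> = (CLINT f|M. iexp (\<Sum>t\<in>T. (\<chi> j. a (t,j)) \<bullet> f t))"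
    proof (intro Bochner_Integration.integral_cong refl arg_cong[where f=iexp])
      fix f
      have "(\<Sum>tj\<in>T \<times> UNIV. a tj * \<phi> f tj) = (\<Sum>tj\<in>T \<times> UNIV. (case tj of (t,j) \<Rightarrow> a (t,j) * f t $ j))"
        by (intro sum.cong) (auto simp: \<phi>_def)
      also have "\<dots> = (\<Sum>t\<in>T. \<Sum>j\<in>UNIV. a (t,j) * f t $ j)"
        by (simp add: sum.cartesian_product)
      also have "\<dots> = (\<Sum>t\<in>T. (\<chi> j. a (t,j)) \<bullet> f t)"
        by (simp add: inner_vec_def)
      finally show "(\<Sum>tj\<in>T \<times> UNIV. a tj * \<phi> f tj) = (\<Sum>t\<in>T. (\<chi> j. a (t,j)) \<bullet> f t)" .
    qed
    finally show ?thesis .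
  qed
  have eq: "distr \<mu> (PiM (T \<times> UNIV) (\<lambda>_. borel)) \<phi> = distr \<nu> (PiM (T \<times> UNIV) (\<lambda>_. borel)) \<phi>"
  proof (rule CW_real)
    show "finite (T \<times> (UNIV::'p set))" using fin by simp
    show "finite_measure (distr \<mu> (PiM (T \<times> UNIV) (\<lambda>_. borel)) \<phi>)"
      by (rule finite_measure.finite_measure_distr[OF f\<mu> m\<phi>\<mu>])
    show "finite_measure (distr \<nu> (PiM (T \<times> UNIV) (\<lambda>_. borel)) \<phi>)"
      by (rule finite_measure.finite_measure_distr[OF f\<nu> m\<phi>\<nu>])
    show "Eb (distr \<mu> (PiM (T \<times> UNIV) (\<lambda>_. borel)) \<phi>) (T \<times> UNIV) a =
          Eb (distr \<nu> (PiM (T \<times> UNIV) (\<lambda>_. borel)) \<phi>) (T \<times> UNIV) a" for a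
      unfolding Eb[OF m\<phi>\<mu>] Eb[OF m\<phi>\<nu>] by (rule ch)
  qed simp_all
  have bk: "distr (distr M (PiM (T \<times> UNIV) (\<lambda>_. borel)) \<phi>) (PiM T (\<lambda>_. borel)) \<psi> = M"
    if mM: "\<phi> \<in> measurable M (PiM (T \<times> UNIV) (\<lambda>_. borel :: real measure))"
      and sM: "sets M = sets (PiM T (\<lambda>_. borel))"
      and spM: "space M = (\<Pi>\<^sub>E t\<in>T. UNIV)" for M :: "('i \<Rightarrow> real^'p) measure"
  proof -
    have "distr (distr M (PiM (T \<times> UNIV) (\<lambda>_. borel)) \<phi>) (PiM T (\<lambda>_. borel)) \<psi> = distr M (PiM T (\<lambda>_. borel)) (\<lambda>x. \<psi> (\<phi> x))"
      using distr_distr[OF m\<psi> mM] unfolding comp_def .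
    also have "\<dots> = distr M (PiM T (\<lambda>_. borel)) (\<lambda>x. x)"
    proof (rule distr_cong[OF refl refl])
      fix f assume "f \<in> space M"
      then have "f \<in> (\<Pi>\<^sub>E t\<in>T. UNIV)" using spM by simp
      then have ext: "f t = undefined" if "t \<notin> T" for t using that by (auto simp: PiE_def extensional_def)
      show "\<psi> (\<phi> f) = f"
      proof
        fix t show "\<psi> (\<phi> f) t = f t"
        proof (cases "t \<in> T")
          case True
          then show ?thesis unfolding \<psi>_def \<phi>_def by (simp add: vec_eq_iff)
        next
          case False
          then show ?thesis unfolding \<psi>_def using ext[OF False] by simp
        qed
      qed
    qed
    also have "\<dots> = M" by (rule distr_id2) (simp add: sM)
    finally show ?thesis .
  qed
  show ?thesis by (metis bk[OF m\<phi>\<mu> s\<mu> sp\<mu>] bk[OF m\<phi>\<nu> s\<nu> sp\<nu>] eq)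
qed

lemma mv_sum: "(X::real^'n^'m) *v (\<Sum>i\<in>S. f i) = (\<Sum>i\<in>S. X *v f i)"
  by (induction S rule: infinite_finite_induct) (auto simp: matrix_vector_right_distrib)

lemma transp_inner: "(transpose (X::real^'n^'m) *v y) \<bullet> z = y \<bullet> (X *v z)"
  by (simp add: dot_lmul_matrix)

lemma swap_sum:
  fixes T :: "nat set" and N :: nat and h :: "nat \<Rightarrow> nat \<Rightarrow> 'a::comm_monoid_add"
  assumes fin: "finite T" and TN: "T \<subseteq> {..<N}"
  shows "(\<Sum>t\<in>T. \<Sum>\<tau><t. h t \<tau>) = (\<Sum>\<tau><N. \<Sum>t\<in>{t\<in>T. \<tau> < t}. h t \<tau>)"
proof -
  have "(\<Sum>t\<in>T. \<Sum>\<tau><t. h t \<tau>) = (\<Sum>t\<in>T. \<Sum>\<tau><N. if \<tau> < t then h t \<tau> else 0)"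
  proof (rule sum.cong[OF refl])
    fix t assume "t \<in> T"
    then have tN: "t \<le> N" using TN by auto
    have "(\<Sum>\<tau><N. if \<tau> < t then h t \<tau> else 0) = (\<Sum>\<tau>\<in>{..<N} \<inter> {\<tau>. \<tau> < t}. h t \<tau>)"
      by (simp add: sum.inter_restrict)
    also have "{..<N} \<inter> {\<tau>. \<tau> < t} = {..<t}" using tN by auto
    finally show "(\<Sum>\<tau><t. h t \<tau>) = (\<Sum>\<tau><N. if \<tau> < t then h t \<tau> else 0)" by simp
  qed
  also have "\<dots> = (\<Sum>\<tau><N. \<Sum>t\<in>T. if \<tau> < t then h t \<tau> else 0)" by (rule sum.swap)
  also have "\<dots> = (\<Sum>\<tau><N. \<Sum>t\<in>{t\<in>T. \<tau> < t}. h t \<tau>)"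
    using fin by (simp add: sum.inter_filter)
  finally show ?thesis .
qed

definition bvec :: "real^'n^'n \<Rightarrow> real^'l^'n \<Rightarrow> real^'n^'p \<Rightarrow> nat set \<Rightarrow> (nat \<Rightarrow> real^'p) \<Rightarrow> nat \<Rightarrow> real^'l" where
  "bvec A G C T a \<tau> = (\<Sum>t\<in>{t\<in>T. \<tau> < t}. transpose (C ** matpow A (t - 1 - \<tau>) ** G) *v a t)"

definition cdet :: "real^'n^'n \<Rightarrow> real^'m^'n \<Rightarrow> real^'n^'p \<Rightarrow> real^'n \<Rightarrow> (nat \<Rightarrow> real^'m) \<Rightarrow> nat \<Rightarrow> nat set \<Rightarrow> (nat \<Rightarrow> real^'p) \<Rightarrow> real" where
  "cdet A B C x0 u N T a = (\<Sum>t\<in>T. a t \<bullet> ((C ** matpow A t) *v x0)) +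
     (\<Sum>\<tau><N. \<Sum>t\<in>{t\<in>T. \<tau> < t}. a t \<bullet> ((C ** matpow A (t - 1 - \<tau>) ** B) *v u \<tau>))"

lemma out_decomp:
  assumes fin: "finite T" and TN: "T \<subseteq> {..<N}"
  shows "(\<Sum>t\<in>T. a t \<bullet> output_proc A B G C w nu x0 u t \<omega>) =
    cdet A B C x0 u N T a + (\<Sum>\<tau><N. bvec A G C T a \<tau> \<bullet> w \<tau> \<omega> + (if \<tau> \<in> T then a \<tau> else 0) \<bullet> nu \<tau> \<omega>)"
proof -
  have pt: "a t \<bullet> output_proc A B G C w nu x0 u t \<omega> =
      a t \<bullet> ((C ** matpow A t) *v x0) +
      (\<Sum>\<tau><t. a t \<bullet> ((C ** matpow A (t - 1 - \<tau>) ** B) *v u \<tau>)) +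
      (\<Sum>\<tau><t. a t \<bullet> ((C ** matpow A (t - 1 - \<tau>) ** G) *v w \<tau> \<omega>)) + a t \<bullet> nu t \<omega>" for t
    by (simp add: output_proc_def state_proc_def matrix_vector_right_distrib mv_sum inner_add_right
        inner_sum_right matrix_vector_mul_assoc sum.distrib matrix_mul_assoc)
  have "(\<Sum>t\<in>T. a t \<bullet> output_proc A B G C w nu x0 u t \<omega>) =
      (\<Sum>t\<in>T. a t \<bullet> ((C ** matpow A t) *v x0)) +
      (\<Sum>t\<in>T. \<Sum>\<tau><t. a t \<bullet> ((C ** matpow A (t - 1 - \<tau>) ** B) *v u \<tau>)) +
      (\<Sum>t\<in>T. \<Sum>\<tau><t. a t \<bullet> ((C ** matpow A (t - 1 - \<tau>) ** G) *v w \<tau> \<omega>)) + (\<Sum>t\<in>T. a t \<bullet> nu t \<omega>)"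
    unfolding pt by (simp add: sum.distrib)
  also have "(\<Sum>t\<in>T. \<Sum>\<tau><t. a t \<bullet> ((C ** matpow A (t - 1 - \<tau>) ** G) *v w \<tau> \<omega>)) =
      (\<Sum>\<tau><N. bvec A G C T a \<tau> \<bullet> w \<tau> \<omega>)"
    unfolding swap_sum[OF fin TN] bvec_def inner_sum_left transp_inner ..
  also have "(\<Sum>t\<in>T. a t \<bullet> nu t \<omega>) = (\<Sum>\<tau><N. (if \<tau> \<in> T then a \<tau> else 0) \<bullet> nu \<tau> \<omega>)"
  proof -
    have "(\<Sum>\<tau><N. (if \<tau> \<in> T then a \<tau> else 0) \<bullet> nu \<tau> \<omega>) = (\<Sum>\<tau><N. if \<tau> \<in> T then a \<tau> \<bullet> nu \<tau> \<omega> else 0)"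
      by (intro sum.cong) auto
    also have "\<dots> = (\<Sum>\<tau>\<in>{..<N} \<inter> T. a \<tau> \<bullet> nu \<tau> \<omega>)" by (simp add: sum.inter_restrict)
    also have "{..<N} \<inter> T = T" using TN by auto
    finally show ?thesis by simp
  qed
  finally show ?thesis
    unfolding cdet_def swap_sum[OF fin TN] by (simp add: sum.distrib)
qed

lemma char_gauss_real:
  assumes v: "0 \<le> v"
  shows "(CLINT x|gauss_real m v. iexp (t * x)) = iexp (t * m) * complex_of_real (exp (- (v * t\<^sup>2) / 2))"
proof (cases "v = 0")
  case True
  then show ?thesis unfolding gauss_real_def by (simp add: integral_return)
next
  case False
  then have vp: "0 < v" using v by simp
  define s where "s = sqrt v"
  have sp: "0 < s" unfolding s_def using vp by simp
  have s2: "s\<^sup>2 = v" unfolding s_def using v by simp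
  have "(CLINT x|gauss_real m v. iexp (t * x)) = (CLINT x|density lborel (normal_density m s). iexp (t * x))"
    unfolding gauss_real_def s_def using False by simp
  also have "\<dots> = (CLINT x|lborel. normal_density m s x *\<^sub>R iexp (t * x))"
    by (rule integral_density) auto
  also have "\<dots> = \<bar>s\<bar> *\<^sub>R (CLINT y|lborel. normal_density m s (m + s * y) *\<^sub>R iexp (t * (m + s * y)))"
    by (rule lborel_integral_real_affine) (use sp in simp)
  also have "\<dots> = (CLINT y|lborel. std_normal_density y *\<^sub>R (iexp (t * m) * iexp ((t * s) * y)))"
  proof -
    have pw: "\<bar>s\<bar> *\<^sub>R (normal_density m s (m + s * y) *\<^sub>R iexp (t * (m + s * y)))
          = std_normal_density y *\<^sub>R (iexp (t * m) * iexp ((t * s) * y))" for y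
    proof -
      have nd: "\<bar>s\<bar> * normal_density m s (m + s * y) = std_normal_density y"
        unfolding normal_density_def using sp
        by (simp add: power_mult_distrib real_sqrt_mult field_simps)
      have ie: "iexp (t * (m + s * y)) = iexp (t * m) * iexp ((t * s) * y)"
        by (simp add: exp_add[symmetric] algebra_simps)
      show ?thesis unfolding ie using nd by (metis scaleR_scaleR)
    qed
    show ?thesis
      by (subst integral_scaleR_right[symmetric], rule Bochner_Integration.integral_cong[OF refl], rule pw)
  qed
  also have "\<dots> = iexp (t * m) * (CLINT y|lborel. std_normal_density y *\<^sub>R iexp ((t * s) * y))"
    by (subst integral_mult_right_zero[symmetric]) (simp add: scaleR_conv_of_real ac_simps)
  also have "(CLINT y|lborel. std_normal_density y *\<^sub>R iexp ((t * s) * y)) = char std_normal_distribution (t * s)"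
    unfolding char_def by (rule integral_density[symmetric]) auto
  also have "\<dots> = complex_of_real (exp (- (v * t\<^sup>2) / 2))"
    unfolding char_std_normal_distribution using s2 by (simp add: power_mult_distrib mult.commute)
  finally show ?thesis .
qed


lemma cont_meas_pair: "(\<lambda>p::('x::euclidean_space \<times> 'y::euclidean_space). b \<bullet> fst p + c \<bullet> snd p) \<in> borel_measurable borel"
  by (intro borel_measurable_continuous_onI continuous_intros)

lemma sys_char:
  fixes A :: "real^'n^'n" and B :: "real^'m^'n" and G :: "real^'l^'n" and C :: "real^'n^'p"
    and mu :: "real^'l" and Psi :: "real^'p^'p"
    and M :: "'a measure" and w :: "nat \<Rightarrow> 'a \<Rightarrow> real^'l" and nu :: "nat \<Rightarrow> 'a \<Rightarrow> real^'p"
  assumes noise: "noise_model M mu Psi w nu" and psd: "\<forall>a. 0 \<le> a \<bullet> (Psi *v a)"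
    and fin: "finite T" and TN: "T \<subseteq> {..<N}"
  shows "(CLINT \<omega>|M. iexp (\<Sum>t\<in>T. a t \<bullet> output_proc A B G C w nu x0 u t \<omega>)) =
    iexp (cdet A B C x0 u N T a + (\<Sum>\<tau><N. bvec A G C T a \<tau> \<bullet> mu)) *
    complex_of_real (exp (- (\<Sum>\<tau><N. bvec A G C T a \<tau> \<bullet> bvec A G C T a \<tau> +
        (if \<tau> \<in> T then a \<tau> else 0) \<bullet> (Psi *v (if \<tau> \<in> T then a \<tau> else 0))) / 2))"
proof -
  from noise have ps: "prob_space M"
    and mw: "\<And>t. w t \<in> borel_measurable M" and mnu: "\<And>t. nu t \<in> borel_measurable M"
    and ind: "prob_space.indep_vars M (\<lambda>_. borel) (\<lambda>t \<omega>. (w t \<omega>, nu t \<omega>)) UNIV"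
    and prod: "\<And>t. distr M borel (\<lambda>\<omega>. (w t \<omega>, nu t \<omega>)) = distr M borel (w t) \<Otimes>\<^sub>M distr M borel (nu t)"
    and gw: "\<And>t. gaussian_vec M (w t) mu (mat 1)"
    and gnu: "\<And>t. gaussian_vec M (nu t) 0 Psi"
    unfolding noise_model_def by auto
  interpret prob_space M by (rule ps)
  define b where "b = bvec A G C T a"
  define a' where "a' = (\<lambda>\<tau>. if \<tau> \<in> T then a \<tau> else 0)"
  define Z where "Z = (\<lambda>\<tau> \<omega>. b \<tau> \<bullet> w \<tau> \<omega> + a' \<tau> \<bullet> nu \<tau> \<omega>)"
  have mZ: "Z \<tau> \<in> borel_measurable M" for \<tau> unfolding Z_def using mw mnu by measurable
  have indZ: "indep_vars (\<lambda>_. borel) Z {..<N}"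
  proof -
    have "indep_vars (\<lambda>_. borel) (\<lambda>\<tau> \<omega>. (\<lambda>p. b \<tau> \<bullet> fst p + a' \<tau> \<bullet> snd p) ((w \<tau> \<omega>, nu \<tau> \<omega>))) UNIV"
      by (rule indep_vars_compose2[OF ind]) (rule cont_meas_pair)
    then have "indep_vars (\<lambda>_. borel) Z UNIV" unfolding Z_def by simp
    then show ?thesis by (rule indep_vars_subset) auto
  qed
  have cZ: "(CLINT \<omega>|M. iexp (Z \<tau> \<omega>)) = iexp (b \<tau> \<bullet> mu) *
      complex_of_real (exp (- (b \<tau> \<bullet> b \<tau> + a' \<tau> \<bullet> (Psi *v a' \<tau>)) / 2))" for \<tau>
  proof -
    have iv2: "indep_var borel (\<lambda>\<omega>. b \<tau> \<bullet> w \<tau> \<omega>) borel (\<lambda>\<omega>. a' \<tau> \<bullet> nu \<tau> \<omega>)"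
    proof -
      define f where "f = (\<lambda>x. b \<tau> \<bullet> x)"
      define g where "g = (\<lambda>y. a' \<tau> \<bullet> y)"
      have mf: "f \<in> borel_measurable borel" unfolding f_def by simp
      have mg: "g \<in> borel_measurable borel" unfolding g_def by simp
      have mpair: "(\<lambda>\<omega>. (w \<tau> \<omega>, nu \<tau> \<omega>)) \<in> measurable M borel"
        unfolding borel_prod[symmetric] using mw mnu by measurable
      have mh: "(\<lambda>p. (f (fst p), g (snd p))) \<in> measurable (borel :: ((real^'l) \<times> (real^'p)) measure) (borel \<Otimes>\<^sub>M borel)"
        unfolding borel_prod[symmetric] using mf mg by measurable
      have e1: "distr M borel (\<lambda>\<omega>. b \<tau> \<bullet> w \<tau> \<omega>) = distr (distr M borel (w \<tau>)) borel f"
        using distr_distr[OF mf mw[of \<tau>]] by (simp add: comp_def f_def)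
      have e2: "distr M borel (\<lambda>\<omega>. a' \<tau> \<bullet> nu \<tau> \<omega>) = distr (distr M borel (nu \<tau>)) borel g"
        using distr_distr[OF mg mnu[of \<tau>]] by (simp add: comp_def g_def)
      have sf: "sigma_finite_measure (distr (distr M borel (nu \<tau>)) borel g)"
      proof -
        have "prob_space (distr (distr M borel (nu \<tau>)) borel g)"
        proof (rule prob_space.prob_space_distr[OF prob_space_distr[OF mnu[of \<tau>]]])
          show "g \<in> measurable (distr M borel (nu \<tau>)) borel"
            using mg by (simp add: measurable_cong_sets[OF sets_distr refl])
        qed
        then show ?thesis by (rule prob_space_imp_sigma_finite)
      qed
      have "distr M borel (\<lambda>\<omega>. b \<tau> \<bullet> w \<tau> \<omega>) \<Otimes>\<^sub>M distr M borel (\<lambda>\<omega>. a' \<tau> \<bullet> nu \<tau> \<omega>)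
          = distr (distr M borel (w \<tau>) \<Otimes>\<^sub>M distr M borel (nu \<tau>)) (borel \<Otimes>\<^sub>M borel) (\<lambda>(x, y). (f x, g y))"
        unfolding e1 e2 by (rule pair_measure_distr) (use mf mg sf in simp_all)
      also have "\<dots> = distr (distr M borel (\<lambda>\<omega>. (w \<tau> \<omega>, nu \<tau> \<omega>))) (borel \<Otimes>\<^sub>M borel) (\<lambda>p. (f (fst p), g (snd p)))"
        unfolding prod[symmetric] by (simp add: case_prod_beta')
      also have "\<dots> = distr M (borel \<Otimes>\<^sub>M borel) (\<lambda>\<omega>. (b \<tau> \<bullet> w \<tau> \<omega>, a' \<tau> \<bullet> nu \<tau> \<omega>))"
        using distr_distr[OF mh mpair] by (simp add: comp_def f_def g_def)
      finally show ?thesis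
        unfolding indep_var_distribution_eq using mw mnu by simp
    qed
    have "(CLINT \<omega>|M. iexp (Z \<tau> \<omega>)) = char (distr M borel (Z \<tau>)) 1"
      unfolding char_def using mZ by (simp add: integral_distr)
    also have "\<dots> = char (distr M borel (\<lambda>\<omega>. b \<tau> \<bullet> w \<tau> \<omega>)) 1 * char (distr M borel (\<lambda>\<omega>. a' \<tau> \<bullet> nu \<tau> \<omega>)) 1"
      unfolding Z_def by (rule char_distr_add[OF iv2])
    also have "distr M borel (\<lambda>\<omega>. b \<tau> \<bullet> w \<tau> \<omega>) = gauss_real (b \<tau> \<bullet> mu) (b \<tau> \<bullet> b \<tau>)"
      using gw[of \<tau>] unfolding gaussian_vec_def by simp
    also have "distr M borel (\<lambda>\<omega>. a' \<tau> \<bullet> nu \<tau> \<omega>) = gauss_real 0 (a' \<tau> \<bullet> (Psi *v a' \<tau>))"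
      using gnu[of \<tau>] unfolding gaussian_vec_def by simp
    also have "char (gauss_real (b \<tau> \<bullet> mu) (b \<tau> \<bullet> b \<tau>)) 1 * char (gauss_real 0 (a' \<tau> \<bullet> (Psi *v a' \<tau>))) 1
        = iexp (b \<tau> \<bullet> mu) * complex_of_real (exp (- (b \<tau> \<bullet> b \<tau>) / 2)) *
          complex_of_real (exp (- (a' \<tau> \<bullet> (Psi *v a' \<tau>)) / 2))"
      unfolding char_def using char_gauss_real[of "b \<tau> \<bullet> b \<tau>" "b \<tau> \<bullet> mu" 1]
        char_gauss_real[of "a' \<tau> \<bullet> (Psi *v a' \<tau>)" 0 1] psd by simp
    also have "\<dots> = iexp (b \<tau> \<bullet> mu) *
      complex_of_real (exp (- (b \<tau> \<bullet> b \<tau> + a' \<tau> \<bullet> (Psi *v a' \<tau>)) / 2))"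
      by (simp only: mult.assoc of_real_mult[symmetric] exp_add[symmetric] minus_add_distrib add_divide_distrib)
    finally show ?thesis .
  qed
  have "(CLINT \<omega>|M. iexp (\<Sum>t\<in>T. a t \<bullet> output_proc A B G C w nu x0 u t \<omega>)) =
      (CLINT \<omega>|M. iexp (cdet A B C x0 u N T a) * iexp (\<Sum>\<tau><N. Z \<tau> \<omega>))"
    unfolding out_decomp[OF fin TN] Z_def b_def a'_def
    by (intro Bochner_Integration.integral_cong refl) (simp only: of_real_add distrib_left exp_add)
  also have "\<dots> = iexp (cdet A B C x0 u N T a) * (CLINT \<omega>|M. iexp (\<Sum>\<tau><N. Z \<tau> \<omega>))"
    by (rule integral_mult_right_zero)
  also have "(CLINT \<omega>|M. iexp (\<Sum>\<tau><N. Z \<tau> \<omega>)) = char (distr M borel (\<lambda>\<omega>. \<Sum>\<tau><N. Z \<tau> \<omega>)) 1"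
    unfolding char_def using mZ by (simp add: integral_distr)
  also have "\<dots> = (\<Prod>\<tau><N. char (distr M borel (Z \<tau>)) 1)"
    by (rule char_distr_sum[OF indZ])
  also have "\<dots> = (\<Prod>\<tau><N. iexp (b \<tau> \<bullet> mu) *
      complex_of_real (exp (- (b \<tau> \<bullet> b \<tau> + a' \<tau> \<bullet> (Psi *v a' \<tau>)) / 2)))"
    by (intro prod.cong refl) (simp add: char_def integral_distr[OF mZ] cZ)
  also have "\<dots> = iexp (\<Sum>\<tau><N. b \<tau> \<bullet> mu) *
      complex_of_real (exp (- (\<Sum>\<tau><N. b \<tau> \<bullet> b \<tau> + a' \<tau> \<bullet> (Psi *v a' \<tau>)) / 2))"
    by (simp add: prod.distrib of_real_sum sum_distrib_left exp_sum sum_negf[symmetric] sum_divide_distrib of_real_prod[symmetric] del: of_real_prod)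
  finally show ?thesis
    unfolding b_def a'_def by (simp only: of_real_add distrib_left exp_add mult.assoc)
qed

definition Vk :: "real^'n1^'n1 \<Rightarrow> real^'n1^'p \<Rightarrow> real^'n2^'n2 \<Rightarrow> real^'n2^'p \<Rightarrow> nat \<Rightarrow> ((real^'n1) \<times> (real^'n2)) set" where
  "Vk A1 C1 A2 C2 k = {z. \<forall>j<k. (C1 ** matpow A1 j) *v fst z = (C2 ** matpow A2 j) *v snd z}"

lemma subspace_Vk: "subspace (Vk A1 C1 A2 C2 k)"
  unfolding subspace_def Vk_def
  by (auto simp: matrix_vector_right_distrib matrix_vector_mult_scaleR)

lemma Vk_Suc_subset: "Vk A1 C1 A2 C2 (Suc k) \<subseteq> Vk A1 C1 A2 C2 k"
  unfolding Vk_def by auto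

lemma Vk_mono: "k \<le> m \<Longrightarrow> Vk A1 C1 A2 C2 m \<subseteq> Vk A1 C1 A2 C2 k"
  unfolding Vk_def by auto

lemma Cmatpow_shift: "(C ** matpow A (Suc j)) *v x = (C ** matpow A j) *v (A *v x)"
  by (simp add: matrix_vector_mul_assoc matrix_mul_assoc)

lemma Vk_stable_step:
  assumes eq: "Vk A1 C1 A2 C2 k = Vk A1 C1 A2 C2 (Suc k)"
  shows "Vk A1 C1 A2 C2 (Suc k) = Vk A1 C1 A2 C2 (Suc (Suc k))"
proof
  show "Vk A1 C1 A2 C2 (Suc (Suc k)) \<subseteq> Vk A1 C1 A2 C2 (Suc k)" by (rule Vk_Suc_subset)
  show "Vk A1 C1 A2 C2 (Suc k) \<subseteq> Vk A1 C1 A2 C2 (Suc (Suc k))"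
  proof
    fix z assume z: "z \<in> Vk A1 C1 A2 C2 (Suc k)"
    obtain x1 x2 where zz: "z = (x1, x2)" by (cases z)
    have "(A1 *v x1, A2 *v x2) \<in> Vk A1 C1 A2 C2 k"
      using z unfolding Vk_def zz by (auto simp: Cmatpow_shift[symmetric])
    then have "(A1 *v x1, A2 *v x2) \<in> Vk A1 C1 A2 C2 (Suc k)" using eq by simp
    then have "(C1 ** matpow A1 k) *v (A1 *v x1) = (C2 ** matpow A2 k) *v (A2 *v x2)"
      unfolding Vk_def by auto
    then have last: "(C1 ** matpow A1 (Suc k)) *v x1 = (C2 ** matpow A2 (Suc k)) *v x2"
      by (simp only: Cmatpow_shift)
    show "z \<in> Vk A1 C1 A2 C2 (Suc (Suc k))"
      using z last unfolding Vk_def zz by (auto simp: less_Suc_eq)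
  qed
qed

lemma Vk_stable:
  assumes eq: "Vk A1 C1 A2 C2 k = Vk A1 C1 A2 C2 (Suc k)"
  shows "k \<le> m \<Longrightarrow> Vk A1 C1 A2 C2 m = Vk A1 C1 A2 C2 k"
proof (induction m rule: dec_induct)
  case base then show ?case by simp
next
  case (step m)
  have "Vk A1 C1 A2 C2 m = Vk A1 C1 A2 C2 (Suc m)"
  proof (cases "m = k")
    case True then show ?thesis using eq by simp
  next
    case False
    then obtain m' where m': "m = Suc m'" "k \<le> m'" using step(1) by (cases m) auto
    have "Vk A1 C1 A2 C2 m' = Vk A1 C1 A2 C2 k"
    proof -
      have "Vk A1 C1 A2 C2 m \<subseteq> Vk A1 C1 A2 C2 m'" using m' by (simp add: Vk_Suc_subset)
      moreover have "Vk A1 C1 A2 C2 m' \<subseteq> Vk A1 C1 A2 C2 k" using m' Vk_mono by blast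
      ultimately show ?thesis using step(3) by auto
    qed
    then have "Vk A1 C1 A2 C2 m' = Vk A1 C1 A2 C2 (Suc m')" using step(3) m' by simp
    then show ?thesis using Vk_stable_step m' by metis
  qed
  then show ?case using step(3) by simp
qed

lemma Vk_exists_stable:
  fixes A1 :: "real^'n1^'n1" and C1 :: "real^'n1^'p" and A2 :: "real^'n2^'n2" and C2 :: "real^'n2^'p"
  shows "\<exists>k\<le>CARD('n1) + CARD('n2). Vk A1 C1 A2 C2 k = Vk A1 C1 A2 C2 (Suc k)"
proof (rule ccontr)
  let ?nt = "CARD('n1) + CARD('n2)"
  let ?V = "Vk A1 C1 A2 C2"
  assume "\<not> ?thesis"
  then have ne: "\<And>k. k \<le> ?nt \<Longrightarrow> ?V k \<noteq> ?V (Suc k)" by blast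
  have lt: "dim (?V (Suc k)) < dim (?V k)" if "k \<le> ?nt" for k
  proof (rule dim_psubset)
    have "?V (Suc k) \<subset> ?V k" using Vk_Suc_subset ne[OF that] by blast
    moreover have "span (?V j) = ?V j" for j using span_eq_iff subspace_Vk by blast
    ultimately show "span (?V (Suc k)) \<subset> span (?V k)" by metis
  qed
  have "dim (?V k) + k \<le> dim (?V 0)" if "k \<le> Suc ?nt" for k
    using that
  proof (induction k)
    case 0 then show ?case by simp
  next
    case (Suc k)
    then show ?case using lt[of k] by simp
  qed
  then have "Suc ?nt \<le> dim (?V 0)" by (metis le_add2 order.refl order_trans)
  moreover have "dim (?V 0) \<le> ?nt"
    using dim_subset_UNIV[of "?V 0"] by simp
  ultimately show False by simp
qed

lemma K_all:
  fixes A1 :: "real^'n1^'n1" and C1 :: "real^'n1^'p" and A2 :: "real^'n2^'n2" and C2 :: "real^'n2^'p"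
  assumes "z \<in> Vk A1 C1 A2 C2 (CARD('n1) + CARD('n2))"
  shows "(C1 ** matpow A1 j) *v fst z = (C2 ** matpow A2 j) *v snd z"
proof -
  let ?nt = "CARD('n1) + CARD('n2)"
  obtain k where k: "k \<le> ?nt" "Vk A1 C1 A2 C2 k = Vk A1 C1 A2 C2 (Suc k)"
    using Vk_exists_stable by blast
  have "Vk A1 C1 A2 C2 ?nt = Vk A1 C1 A2 C2 k" using Vk_stable[OF k(2) k(1)] .
  moreover have "Vk A1 C1 A2 C2 (Suc (max j ?nt)) = Vk A1 C1 A2 C2 k"
    using Vk_stable[OF k(2), of "Suc (max j ?nt)"] k(1) by simp
  ultimately have "z \<in> Vk A1 C1 A2 C2 (Suc (max j ?nt))" using assms by simp
  then show ?thesis unfolding Vk_def by auto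
qed

lemma Obs_eq_Vk: "(Obs k A1 C1 x1 = Obs k A2 C2 x2) \<longleftrightarrow> (x1, x2) \<in> Vk A1 C1 A2 C2 k"
  unfolding Obs_def Vk_def by (auto simp: fun_eq_iff)

lemma meas_mv: "f \<in> borel_measurable M \<Longrightarrow> (\<lambda>\<omega>. (X::real^'n^'m) *v f \<omega>) \<in> borel_measurable M"
  by (rule measurable_compose[OF _ borel_measurable_continuous_onI[OF linear_continuous_on[OF matrix_vector_mul_bounded_linear]]])

lemma meas_output:
  assumes "\<And>t. w t \<in> borel_measurable M" "\<And>t. nu t \<in> borel_measurable M"
  shows "(\<lambda>\<omega>. output_proc A B G C w nu x0 u t \<omega>) \<in> borel_measurable M"
  unfolding output_proc_def state_proc_def
  by (intro borel_measurable_add borel_measurable_sum meas_mv borel_measurable_const assms)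

lemma char_restrict:
  assumes mY: "\<And>t. Y t \<in> borel_measurable M" and fin: "finite T"
  shows "(CLINT f|distr M (PiM T (\<lambda>_. borel)) (\<lambda>\<omega>. restrict (\<lambda>t. Y t \<omega>) T). iexp (\<Sum>t\<in>T. a t \<bullet> f t))
       = (CLINT \<omega>|M. iexp (\<Sum>t\<in>T. a t \<bullet> (Y t \<omega> :: real^'p)))"
proof -
  have mr: "(\<lambda>\<omega>. restrict (\<lambda>t. Y t \<omega>) T) \<in> measurable M (PiM T (\<lambda>_. borel))"
    using mY by (intro measurable_restrict) auto
  have mg: "(\<lambda>f. iexp (\<Sum>t\<in>T. a t \<bullet> f t)) \<in> borel_measurable (PiM T (\<lambda>_. borel :: (real^'p) measure))"
    by measurable
  show ?thesis
    by (subst integral_distr[OF mr mg]) (auto intro!: Bochner_Integration.integral_cong arg_cong[where f=iexp] sum.cong)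
qed


lemma transp_inner2: "(transpose (X::real^'n^'m) *v y) \<bullet> (transpose Y *v z) = y \<bullet> ((X ** transpose Y) *v z)"
  using transp_inner[of X y "transpose Y *v z"] by (simp only: matrix_vector_mul_assoc)

lemma bmu_eq:
  assumes p2: "\<forall>t. (C1 ** matpow A1 t ** G1) *v mu1 = (C2 ** matpow A2 t ** G2) *v mu2"
  shows "bvec A1 G1 C1 T a \<tau> \<bullet> mu1 = bvec A2 G2 C2 T a \<tau> \<bullet> mu2"
  unfolding bvec_def inner_sum_left transp_inner using p2 by simp

lemma bb_eq:
  fixes A1 :: "real^'n1^'n1" and G1 :: "real^'l1^'n1" and C1 :: "real^'n1^'p"
    and A2 :: "real^'n2^'n2" and G2 :: "real^'l2^'n2" and C2 :: "real^'n2^'p"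
  assumes p3: "\<forall>h k. C1 ** matpow A1 k ** G1 ** transpose G1 ** transpose (matpow A1 h) ** transpose C1
                 = C2 ** matpow A2 k ** G2 ** transpose G2 ** transpose (matpow A2 h) ** transpose C2"
  shows "bvec A1 G1 C1 T a \<tau> \<bullet> bvec A1 G1 C1 T a \<tau> = bvec A2 G2 C2 T a \<tau> \<bullet> bvec A2 G2 C2 T a \<tau>"
proof -
  have e: "(C1 ** matpow A1 k ** G1) ** transpose (C1 ** matpow A1 h ** G1)
      = (C2 ** matpow A2 k ** G2) ** transpose (C2 ** matpow A2 h ** G2)" for h k
    using p3 by (simp add: matrix_transpose_mul matrix_mul_assoc)
  show ?thesis
    unfolding bvec_def inner_sum_left inner_sum_right transp_inner2 e ..
qed

lemma cdet_diff:
  assumes p1: "\<forall>t. C1 ** matpow A1 t ** B1 = C2 ** matpow A2 t ** B2"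
  shows "cdet A1 B1 C1 x1 u N T a - cdet A2 B2 C2 x2 u N T a =
    (\<Sum>t\<in>T. a t \<bullet> ((C1 ** matpow A1 t) *v x1 - (C2 ** matpow A2 t) *v x2))"
  unfolding cdet_def using p1 by (simp add: inner_diff_right sum_subtractf)


theorem corollary1:
  fixes A1 :: "real^'n1^'n1" and B1 :: "real^'m^'n1" and G1 :: "real^'l1^'n1" and C1 :: "real^'n1^'p"
    and A2 :: "real^'n2^'n2" and B2 :: "real^'m^'n2" and G2 :: "real^'l2^'n2" and C2 :: "real^'n2^'p"
    and mu1 :: "real^'l1" and mu2 :: "real^'l2" and Psi1 Psi2 :: "real^'p^'p"
    and M1 :: "'a measure" and w1 :: "nat \<Rightarrow> 'a \<Rightarrow> real^'l1" and nu1 :: "nat \<Rightarrow> 'a \<Rightarrow> real^'p"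
    and M2 :: "'b measure" and w2 :: "nat \<Rightarrow> 'b \<Rightarrow> real^'l2" and nu2 :: "nat \<Rightarrow> 'b \<Rightarrow> real^'p"
  assumes Psi_sym: "transpose Psi1 = Psi1" and Psi_psd: "\<forall>a. 0 \<le> a \<bullet> (Psi1 *v a)"
    and noise1: "noise_model M1 mu1 Psi1 w1 nu1"
    and noise2: "noise_model M2 mu2 Psi2 w2 nu2"
    and p0: "Psi1 = Psi2"
    and p1: "\<forall>t. C1 ** matpow A1 t ** B1 = C2 ** matpow A2 t ** B2"
    and p2: "\<forall>t. (C1 ** matpow A1 t ** G1) *v mu1 = (C2 ** matpow A2 t ** G2) *v mu2"
    and p3: "\<forall>h k. C1 ** matpow A1 k ** G1 ** transpose G1 ** transpose (matpow A1 h) ** transpose C1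
                 = C2 ** matpow A2 k ** G2 ** transpose G2 ** transpose (matpow A2 h) ** transpose C2"
  defines "nt \<equiv> CARD('n1) + CARD('n2)"
  defines "K \<equiv> {z :: (real^'n1) \<times> (real^'n2). Obs nt A1 C1 (fst z) = Obs nt A2 C2 (snd z)}"
  defines "EqBeh \<equiv> \<lambda>R :: ((real^'n1) \<times> (real^'n2)) set. \<forall>x1 x2 u. (x1, x2) \<in> R \<longrightarrow>
             stoch_equiv M1 (output_proc A1 B1 G1 C1 w1 nu1 x1 u) M2 (output_proc A2 B2 G2 C2 w2 nu2 x2 u)"
  shows "subspace K \<and> EqBeh K \<and> (\<forall>R. subspace R \<and> EqBeh R \<longrightarrow> R \<subseteq> K)"
proof -
  have KV: "K = Vk A1 C1 A2 C2 nt"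
    unfolding K_def by (auto simp: Obs_eq_Vk)
  have psd2: "\<forall>a. 0 \<le> a \<bullet> (Psi2 *v a)" using Psi_psd p0 by simp
  have ps1: "prob_space M1" and ps2: "prob_space M2"
    using noise1 noise2 unfolding noise_model_def by auto
  have mw1: "\<And>t. w1 t \<in> borel_measurable M1" and mnu1: "\<And>t. nu1 t \<in> borel_measurable M1"
    using noise1 unfolding noise_model_def by auto
  have mw2: "\<And>t. w2 t \<in> borel_measurable M2" and mnu2: "\<And>t. nu2 t \<in> borel_measurable M2"
    using noise2 unfolding noise_model_def by auto
  have chdiff: "(CLINT \<omega>|M1. iexp (\<Sum>t\<in>T. a t \<bullet> output_proc A1 B1 G1 C1 w1 nu1 ya u t \<omega>)) =
      iexp (\<Sum>t\<in>T. a t \<bullet> ((C1 ** matpow A1 t) *v ya - (C2 ** matpow A2 t) *v yb)) *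
      (CLINT \<omega>|M2. iexp (\<Sum>t\<in>T. a t \<bullet> output_proc A2 B2 G2 C2 w2 nu2 yb u t \<omega>))"
    if fin: "finite T" for T a ya yb u
  proof -
    obtain N where TN: "T \<subseteq> {..<N}" using finite_nat_bounded[OF fin] by blast
    let ?a' = "\<lambda>\<tau>. if \<tau> \<in> T then a \<tau> else (0::real^'p)"
    have c: "cdet A1 B1 C1 ya u N T a = (\<Sum>t\<in>T. a t \<bullet> ((C1 ** matpow A1 t) *v ya - (C2 ** matpow A2 t) *v yb))
        + cdet A2 B2 C2 yb u N T a"
      using cdet_diff[OF p1, of ya u N T a yb] by simp
    have m: "(\<Sum>\<tau><N. bvec A1 G1 C1 T a \<tau> \<bullet> mu1) = (\<Sum>\<tau><N. bvec A2 G2 C2 T a \<tau> \<bullet> mu2)"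
      using bmu_eq[OF p2] by simp
    have v: "(\<Sum>\<tau><N. bvec A1 G1 C1 T a \<tau> \<bullet> bvec A1 G1 C1 T a \<tau> + ?a' \<tau> \<bullet> (Psi1 *v ?a' \<tau>)) =
             (\<Sum>\<tau><N. bvec A2 G2 C2 T a \<tau> \<bullet> bvec A2 G2 C2 T a \<tau> + ?a' \<tau> \<bullet> (Psi2 *v ?a' \<tau>))"
      using bb_eq[OF p3] p0 by simp
    show ?thesis
      unfolding sys_char[OF noise1 Psi_psd fin TN] sys_char[OF noise2 psd2 fin TN] c m v
      by (simp only: of_real_add distrib_left exp_add mult.assoc add.assoc)
  qed
  have sub: "subspace K" unfolding KV by (rule subspace_Vk)
  have eqK: "EqBeh K"
    unfolding EqBeh_def
  proof (intro allI impI)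
    fix x1 x2 u assume z: "(x1, x2) \<in> K"
    have all: "(C1 ** matpow A1 j) *v x1 = (C2 ** matpow A2 j) *v x2" for j
      using K_all[of "(x1,x2)" A1 C1 A2 C2 j] z unfolding KV nt_def by simp
    show "stoch_equiv M1 (output_proc A1 B1 G1 C1 w1 nu1 x1 u) M2 (output_proc A2 B2 G2 C2 w2 nu2 x2 u)"
      unfolding stoch_equiv_def
    proof (intro allI impI)
      fix T :: "nat set" assume fin: "finite T"
      have mY1: "\<And>t. output_proc A1 B1 G1 C1 w1 nu1 x1 u t \<in> borel_measurable M1"
        by (intro meas_output mw1 mnu1)
      have mY2: "\<And>t. output_proc A2 B2 G2 C2 w2 nu2 x2 u t \<in> borel_measurable M2"
        by (intro meas_output mw2 mnu2)
      have mr1: "(\<lambda>\<omega>. restrict (\<lambda>t. output_proc A1 B1 G1 C1 w1 nu1 x1 u t \<omega>) T) \<in> measurable M1 (PiM T (\<lambda>_. borel))"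
        using mY1 by (intro measurable_restrict) auto
      have mr2: "(\<lambda>\<omega>. restrict (\<lambda>t. output_proc A2 B2 G2 C2 w2 nu2 x2 u t \<omega>) T) \<in> measurable M2 (PiM T (\<lambda>_. borel))"
        using mY2 by (intro measurable_restrict) auto
      show "distr M1 (PiM T (\<lambda>_. borel)) (\<lambda>\<omega>. restrict (\<lambda>t. output_proc A1 B1 G1 C1 w1 nu1 x1 u t \<omega>) T) =
            distr M2 (PiM T (\<lambda>_. borel)) (\<lambda>\<omega>. restrict (\<lambda>t. output_proc A2 B2 G2 C2 w2 nu2 x2 u t \<omega>) T)"
      proof (rule CW_vec[OF fin])
        show "finite_measure (distr M1 (PiM T (\<lambda>_. borel)) (\<lambda>\<omega>. restrict (\<lambda>t. output_proc A1 B1 G1 C1 w1 nu1 x1 u t \<omega>) T))"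
          using prob_space.prob_space_distr[OF ps1 mr1] by (simp add: prob_space_def)
        show "finite_measure (distr M2 (PiM T (\<lambda>_. borel)) (\<lambda>\<omega>. restrict (\<lambda>t. output_proc A2 B2 G2 C2 w2 nu2 x2 u t \<omega>) T))"
          using prob_space.prob_space_distr[OF ps2 mr2] by (simp add: prob_space_def)
        fix a :: "nat \<Rightarrow> real^'p"
        show "(CLINT f|distr M1 (PiM T (\<lambda>_. borel)) (\<lambda>\<omega>. restrict (\<lambda>t. output_proc A1 B1 G1 C1 w1 nu1 x1 u t \<omega>) T). iexp (\<Sum>t\<in>T. a t \<bullet> f t)) =
              (CLINT f|distr M2 (PiM T (\<lambda>_. borel)) (\<lambda>\<omega>. restrict (\<lambda>t. output_proc A2 B2 G2 C2 w2 nu2 x2 u t \<omega>) T). iexp (\<Sum>t\<in>T. a t \<bullet> f t))"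
          unfolding char_restrict[OF mY1 fin] char_restrict[OF mY2 fin] chdiff[OF fin, where yb=x2]
          by (simp add: all)
      qed simp_all
    qed
  qed
  have maxi: "R \<subseteq> K" if R: "subspace R \<and> EqBeh R" for R
  proof
    fix z assume zR: "z \<in> R"
    obtain x1 x2 where zz: "z = (x1, x2)" by (cases z)
    have st: "stoch_equiv M1 (output_proc A1 B1 G1 C1 w1 nu1 x1 (\<lambda>_. 0)) M2 (output_proc A2 B2 G2 C2 w2 nu2 x2 (\<lambda>_. 0))"
      using R zR zz unfolding EqBeh_def by blast
    have "(C1 ** matpow A1 j) *v x1 = (C2 ** matpow A2 j) *v x2" for j
    proof (rule ccontr)
      define d where "d = (C1 ** matpow A1 j) *v x1 - (C2 ** matpow A2 j) *v x2"
      assume "(C1 ** matpow A1 j) *v x1 \<noteq> (C2 ** matpow A2 j) *v x2"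
      then have d0: "d \<noteq> 0" unfolding d_def by simp
      define e where "e = (pi / (d \<bullet> d)) *\<^sub>R d"
      have ed: "e \<bullet> d = pi" unfolding e_def using d0 by simp
      let ?Y1 = "output_proc A1 B1 G1 C1 w1 nu1 x1 (\<lambda>_. 0)"
      let ?Y2 = "output_proc A2 B2 G2 C2 w2 nu2 x2 (\<lambda>_. 0)"
      have mY1: "\<And>t. ?Y1 t \<in> borel_measurable M1" by (intro meas_output mw1 mnu1)
      have mY2: "\<And>t. ?Y2 t \<in> borel_measurable M2" by (intro meas_output mw2 mnu2)
      have dd: "distr M1 (PiM {j} (\<lambda>_. borel)) (\<lambda>\<omega>. restrict (\<lambda>t. ?Y1 t \<omega>) {j}) =
                distr M2 (PiM {j} (\<lambda>_. borel)) (\<lambda>\<omega>. restrict (\<lambda>t. ?Y2 t \<omega>) {j})"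
        using st unfolding stoch_equiv_def by simp
      have "(CLINT \<omega>|M1. iexp (\<Sum>t\<in>{j}. (\<lambda>_. e) t \<bullet> ?Y1 t \<omega>)) = (CLINT \<omega>|M2. iexp (\<Sum>t\<in>{j}. (\<lambda>_. e) t \<bullet> ?Y2 t \<omega>))"
      proof -
        have "(CLINT \<omega>|M1. iexp (\<Sum>t\<in>{j}. (\<lambda>_. e) t \<bullet> ?Y1 t \<omega>)) =
          (CLINT f|distr M1 (PiM {j} (\<lambda>_. borel)) (\<lambda>\<omega>. restrict (\<lambda>t. ?Y1 t \<omega>) {j}). iexp (\<Sum>t\<in>{j}. (\<lambda>_. e) t \<bullet> f t))"
          by (rule char_restrict[OF mY1, symmetric]) simp
        also have "\<dots> = (CLINT f|distr M2 (PiM {j} (\<lambda>_. borel)) (\<lambda>\<omega>. restrict (\<lambda>t. ?Y2 t \<omega>) {j}). iexp (\<Sum>t\<in>{j}. (\<lambda>_. e) t \<bullet> f t))"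
          by (simp only: dd)
        also have "\<dots> = (CLINT \<omega>|M2. iexp (\<Sum>t\<in>{j}. (\<lambda>_. e) t \<bullet> ?Y2 t \<omega>))"
          by (rule char_restrict[OF mY2]) simp
        finally show ?thesis .
      qed
      then have "iexp pi * (CLINT \<omega>|M2. iexp (\<Sum>t\<in>{j}. (\<lambda>_. e) t \<bullet> ?Y2 t \<omega>)) =
                 (CLINT \<omega>|M2. iexp (\<Sum>t\<in>{j}. (\<lambda>_. e) t \<bullet> ?Y2 t \<omega>))"
        using chdiff[where T="{j}" and a="\<lambda>_. e" and ya=x1 and u="\<lambda>_. 0" and yb=x2] ed unfolding d_def by simp
      moreover have "iexp pi = -1" by (simp add: iexp_cis)
      ultimately have z0: "(CLINT \<omega>|M2. iexp (\<Sum>t\<in>{j}. (\<lambda>_. e) t \<bullet> ?Y2 t \<omega>)) = 0" by simp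
      have "(CLINT \<omega>|M2. iexp (\<Sum>t\<in>{j}. (\<lambda>_. e) t \<bullet> ?Y2 t \<omega>)) \<noteq> 0"
        by (subst sys_char[OF noise2 psd2, where T="{j}" and N="Suc j"]) auto
      then show False using z0 by simp
    qed
    then show "z \<in> K" unfolding KV zz Vk_def by simp
  qed
  show ?thesis using sub eqK maxi by blast
qed

end
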